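(* Let $K_0,\dots,K_n$ be strictly concave kernel functions such that either all satisfy condition $(\infty')$ or all belong to $\mathrm{C}^1(0,2\pi)$. Let $\mathbf{w}^*\in\mathbb{T}^n$ be a local minimum point of $\overline{m}$, i.e. there is $\eta>0$ with $\overline{m}(\mathbf{w}^* )=\min\{\overline{m}(\mathbf{y}):d_{\mathbb{T}^n}(\mathbf{y},\mathbf{w}^* )<\eta\}$. Then $\mathbf{w}^*$ is an equioscillation point, i.e. $\underline{m}(\mathbf{w}^* )=\overline{m}(\mathbf{w}^* )$. Consequently, $\mathbf{w}^*$ belongs to some open simplex $S_\sigma$.
   Context: Identify the torus $\mathbb{T}=\mathbb{R}/2\pi\mathbb{Z}$ with $[0,2\pi)$, $d_{\mathbb{T}}(x,y)=\min\{|x-y|,2\pi-|x-y|\}$, $d_{\mathbb{T}^n}(\mathbf{x},\mathbf{y})=\max_jd_{\mathbb{T}}(x_j,y_j)$. A concave kernel function is a $2\pi$-periodic function $K:\mathbb{R}\to[-\infty,\infty)$ which is real-valued and concave on $(0,2\pi)$ with $\lim_{t\downarrow0}K(t)=\lim_{t\uparrow2\pi}K(t)$ existing in $[-\infty,\infty)$; strictly concave if strictly concave on $(0,2\pi)$. Condition $(\infty')$: either $\lim_{t\uparrow2\pi}D_\pm K(t)=-\infty$, or $\lim_{t\downarrow0}D_\pm K(t)=+\infty$ (both one-sided derivatives). For $\mathbf{y}\in\mathbb{T}^n$, $y_0=0$, $y_{n+1}=2\pi$, $F(\mathbf{y},t)=K_0(t)+\sum_{j=1}^nK_j(t-y_j)$.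 For a permutation $\sigma$ of $\{1,\dots,n\}$ ($\sigma(0)=0,\sigma(n+1)=n+1$), $S_\sigma=\{\mathbf{y}:0<y_{\sigma(1)}<\dots<y_{\sigma(n)}<2\pi\}$; for $\mathbf{y}$ with $0\le y_{\sigma(1)}\le\dots\le y_{\sigma(n)}\le2\pi$, $m_{\sigma(k)}(\mathbf{y})=\sup_{t\in[y_{\sigma(k)},y_{\sigma(k+1)}]}F(\mathbf{y},t)$, $k=0,\dots,n$; $\overline{m}(\mathbf{y})=\max_jm_j(\mathbf{y})=\sup_{t\in\mathbb{T}}F(\mathbf{y},t)$ and $\underline{m}(\mathbf{y})=\min_jm_j(\mathbf{y})$ (independent of the admissible $\sigma$). An equioscillation point is a $\mathbf{y}$ with $m_0(\mathbf{y})=\dots=m_n(\mathbf{y})$. *)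

theory Defs
  imports "HOL-Analysis.Analysis" "HOL-Library.Extended_Real"
begin

text \<open>Kernels take values in the extended reals; on (0,2pi) they are real-valued.
  The real part used for concavity and derivatives is kr K t = real_of_ereal (K t).\<close>

definition kr :: "(real \<Rightarrow> ereal) \<Rightarrow> real \<Rightarrow> real" where
  "kr K t = real_of_ereal (K t)"

definition strictly_concave_on :: "real set \<Rightarrow> (real \<Rightarrow> real) \<Rightarrow> bool" where
  "strictly_concave_on S f \<longleftrightarrow> convex S \<and>
     (\<forall>x\<in>S. \<forall>y\<in>S. x \<noteq> y \<longrightarrow> (\<forall>u::real. 0 < u \<and> u < 1 \<longrightarrow>
        (1 - u) * f x + u * f y < f ((1 - u) * x + u * y)))"

definition concave_kernel :: "(real \<Rightarrow> ereal) \<Rightarrow> bool" where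
  "concave_kernel K \<longleftrightarrow>
     (\<forall>t. K (t + 2 * pi) = K t) \<and>
     (\<forall>t\<in>{0<..<2 * pi}. \<bar>K t\<bar> \<noteq> \<infinity>) \<and>
     concave_on {0<..<2 * pi} (kr K) \<and>
     (\<exists>L. L \<noteq> \<infinity> \<and> (K \<longlongrightarrow> L) (at_right 0) \<and> (K \<longlongrightarrow> L) (at_left (2 * pi)) \<and> K 0 = L)"

definition strictly_concave_kernel :: "(real \<Rightarrow> ereal) \<Rightarrow> bool" where
  "strictly_concave_kernel K \<longleftrightarrow> concave_kernel K \<and> strictly_concave_on {0<..<2 * pi} (kr K)"

definition Dplus :: "(real \<Rightarrow> real) \<Rightarrow> real \<Rightarrow> real" where
  "Dplus f t = Lim (at_right 0) (\<lambda>h. (f (t + h) - f t) / h)"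

definition Dminus :: "(real \<Rightarrow> real) \<Rightarrow> real \<Rightarrow> real" where
  "Dminus f t = Lim (at_left 0) (\<lambda>h. (f (t + h) - f t) / h)"

definition cond_inf' :: "(real \<Rightarrow> ereal) \<Rightarrow> bool" where
  "cond_inf' K \<longleftrightarrow>
     (filterlim (Dplus (kr K)) at_bot (at_left (2 * pi)) \<and>
      filterlim (Dminus (kr K)) at_bot (at_left (2 * pi))) \<or>
     (filterlim (Dplus (kr K)) at_top (at_right 0) \<and>
      filterlim (Dminus (kr K)) at_top (at_right 0))"

definition C1_kernel :: "(real \<Rightarrow> ereal) \<Rightarrow> bool" where
  "C1_kernel K \<longleftrightarrow> (\<exists>k'. (\<forall>t\<in>{0<..<2 * pi}. (kr K has_real_derivative k' t) (at t)) \<and>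
                         continuous_on {0<..<2 * pi} k')"

definition torus :: "nat \<Rightarrow> (nat \<Rightarrow> real) set" where
  "torus n = {y. \<forall>j\<in>{1..n}. 0 \<le> y j \<and> y j < 2 * pi}"

definition dT :: "real \<Rightarrow> real \<Rightarrow> real" where
  "dT x y = min \<bar>x - y\<bar> (2 * pi - \<bar>x - y\<bar>)"

definition dTn :: "nat \<Rightarrow> (nat \<Rightarrow> real) \<Rightarrow> (nat \<Rightarrow> real) \<Rightarrow> real" where
  "dTn n x y = Max (insert 0 ((\<lambda>j. dT (x j) (y j)) ` {1..n}))"

definition Fsum :: "nat \<Rightarrow> (nat \<Rightarrow> real \<Rightarrow> ereal) \<Rightarrow> (nat \<Rightarrow> real) \<Rightarrow> real \<Rightarrow> ereal" where
  "Fsum n K y t = K 0 t + (\<Sum>j\<in>{1..n}. K j (t - y j))"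

definition node :: "nat \<Rightarrow> (nat \<Rightarrow> real) \<Rightarrow> nat \<Rightarrow> real" where
  "node n y j = (if j = 0 then 0 else if j = n + 1 then 2 * pi else y j)"

definition ext_perm :: "nat \<Rightarrow> (nat \<Rightarrow> nat) \<Rightarrow> nat \<Rightarrow> nat" where
  "ext_perm n \<sigma> k = (if k = 0 then 0 else if k = n + 1 then n + 1 else \<sigma> k)"

definition admissible :: "nat \<Rightarrow> (nat \<Rightarrow> real) \<Rightarrow> (nat \<Rightarrow> nat) \<Rightarrow> bool" where
  "admissible n y \<sigma> \<longleftrightarrow> \<sigma> permutes {1..n} \<and>
     (\<forall>k\<in>{0..n}. node n y (ext_perm n \<sigma> k) \<le> node n y (ext_perm n \<sigma> (k + 1)))"

definition m_arc :: "nat \<Rightarrow> (nat \<Rightarrow> real \<Rightarrow> ereal) \<Rightarrow> (nat \<Rightarrow> real) \<Rightarrow> (nat \<Rightarrow> nat) \<Rightarrow> nat \<Rightarrow> ereal" where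
  "m_arc n K y \<sigma> k = (SUP t\<in>{node n y (ext_perm n \<sigma> k) .. node n y (ext_perm n \<sigma> (k + 1))}. Fsum n K y t)"

definition m_upper :: "nat \<Rightarrow> (nat \<Rightarrow> real \<Rightarrow> ereal) \<Rightarrow> (nat \<Rightarrow> real) \<Rightarrow> ereal" where
  "m_upper n K y = (let \<sigma> = (SOME \<sigma>. admissible n y \<sigma>) in Max (m_arc n K y \<sigma> ` {0..n}))"

definition m_lower :: "nat \<Rightarrow> (nat \<Rightarrow> real \<Rightarrow> ereal) \<Rightarrow> (nat \<Rightarrow> real) \<Rightarrow> ereal" where
  "m_lower n K y = (let \<sigma> = (SOME \<sigma>. admissible n y \<sigma>) in Min (m_arc n K y \<sigma> ` {0..n}))"

definition open_simplex :: "nat \<Rightarrow> (nat \<Rightarrow> nat) \<Rightarrow> (nat \<Rightarrow> real) set" where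
  "open_simplex n \<sigma> = {y. \<forall>k\<in>{0..n}. node n y (ext_perm n \<sigma> k) < node n y (ext_perm n \<sigma> (k + 1))}"

end

theory Submission
  imports Defs
begin

definition slp :: "(real \<Rightarrow> real) \<Rightarrow> real \<Rightarrow> real \<Rightarrow> real" where
  "slp g x y = (g y - g x) / (y - x)"

lemma sc_chord:
  assumes sc: "strictly_concave_on {0<..<2*pi} g" and xyz: "0 < x" "x < y" "y < z" "z < 2*pi"
  shows "slp g x z < slp g x y" "slp g y z < slp g x z"
proof -
  define u where "u = (y - x) / (z - x)"
  have u: "0 < u" "u < 1" using xyz by (auto simp: u_def field_simps)
  have uz: "u * (z - x) = y - x" using xyz by (simp add: u_def)
  have yu: "y = (1 - u) * x + u * z" using uz by (simp add: algebra_simps)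
  have "(1 - u) * g x + u * g z < g ((1 - u) * x + u * z)"
    using sc xyz u unfolding strictly_concave_on_def by auto
  hence ineq: "(1 - u) * g x + u * g z < g y" using yu by simp
  have zx: "z - x > 0" using xyz by simp
  have e1: "y - x = u * (z - x)" using zx by (simp add: u_def)
  have e2: "z - y = (1 - u) * (z - x)" using zx by (simp add: u_def field_simps)
  have "u * (g z - g x) < g y - g x" using ineq by (simp add: algebra_simps)
  hence "u * (g z - g x) / (u * (z - x)) < (g y - g x) / (u * (z - x))"
    using u zx by (intro divide_strict_right_mono) auto
  thus "slp g x z < slp g x y" unfolding slp_def e1 using u zx by simp
  have "g z - g y < (1 - u) * (g z - g x)" using ineq by (simp add: algebra_simps)
  hence "(g z - g y) / ((1 - u) * (z - x)) < (1 - u) * (g z - g x) / ((1 - u) * (z - x))"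
    using u zx by (intro divide_strict_right_mono) auto
  thus "slp g y z < slp g x z" unfolding slp_def e2 using u zx by simp
qed

definition Dp :: "(real \<Rightarrow> real) \<Rightarrow> real \<Rightarrow> real" where
  "Dp g x = Sup (slp g x ` {x<..<2*pi})"
definition Dm :: "(real \<Rightarrow> real) \<Rightarrow> real \<Rightarrow> real" where
  "Dm g x = Inf ((\<lambda>y. slp g y x) ` {0<..<x})"

lemma slp_lr:
  assumes sc: "strictly_concave_on {0<..<2*pi} g" and "0 < z" "z < x" "x < y" "y < 2*pi"
  shows "slp g x y < slp g z x"
  using sc_chord[OF sc, of z x y] assms by linarith

lemma bda:
  assumes sc: "strictly_concave_on {0<..<2*pi} g" and x: "0 < x" "x < 2*pi"
  shows "bdd_above (slp g x ` {x<..<2*pi})"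
  using slp_lr[OF sc, of "x/2" x] x by (auto intro!: bdd_aboveI[of _ "slp g (x/2) x"] less_imp_le)

lemma bdb:
  assumes sc: "strictly_concave_on {0<..<2*pi} g" and x: "0 < x" "x < 2*pi"
  shows "bdd_below ((\<lambda>y. slp g y x) ` {0<..<x})"
  using slp_lr[OF sc, of _ x "(x + 2*pi)/2"] x
  by (auto intro!: bdd_belowI[of _ "slp g x ((x + 2*pi)/2)"] less_imp_le)

lemma Dp_gt:
  assumes sc: "strictly_concave_on {0<..<2*pi} g" and x: "0 < x" and y: "x < y" "y < 2*pi"
  shows "slp g x y < Dp g x"
proof -
  have "slp g x y < slp g x ((x+y)/2)" using sc_chord[OF sc, of x "(x+y)/2" y] y x by auto
  also have "\<dots> \<le> Dp g x" unfolding Dp_def using y x bda[OF sc, of x] by (intro cSup_upper) auto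
  finally show ?thesis .
qed

lemma Dm_lt:
  assumes sc: "strictly_concave_on {0<..<2*pi} g" and x: "x < 2*pi" and z: "0 < z" "z < x"
  shows "Dm g x < slp g z x"
proof -
  have "Dm g x \<le> slp g ((z+x)/2) x" unfolding Dm_def using z x bdb[OF sc, of x] by (intro cInf_lower) auto
  also have "\<dots> < slp g z x" using sc_chord[OF sc, of z "(z+x)/2" x] z x by auto
  finally show ?thesis .
qed

lemma Dp_le_Dm:
  assumes sc: "strictly_concave_on {0<..<2*pi} g" and x: "0 < x" "x < 2*pi"
  shows "Dp g x \<le> Dm g x"
proof -
  have ne1: "slp g x ` {x<..<2*pi} \<noteq> {}" using x by auto
  have ne2: "(\<lambda>y. slp g y x) ` {0<..<x} \<noteq> {}" using x by auto
  show ?thesis unfolding Dp_def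
  proof (rule cSup_least[OF ne1])
    fix s assume "s \<in> slp g x ` {x<..<2*pi}"
    then obtain y where y: "y \<in> {x<..<2*pi}" and s: "s = slp g x y" by auto
    show "s \<le> Dm g x" unfolding Dm_def s
    proof (rule cInf_greatest[OF ne2])
      fix r assume "r \<in> (\<lambda>y. slp g y x) ` {0<..<x}"
      then obtain z where z: "z \<in> {0<..<x}" and r: "r = slp g z x" by auto
      show "slp g x y \<le> r" unfolding r using slp_lr[OF sc, of z x y] y z by auto
    qed
  qed
qed

lemma Dp_tendsto:
  assumes sc: "strictly_concave_on {0<..<2*pi} g" and x: "0 < x" "x < 2*pi"
  shows "((\<lambda>h. (g (x+h) - g x) / h) \<longlongrightarrow> Dp g x) (at_right 0)"
proof (rule order_tendstoI)
  have q: "(g (x+h) - g x) / h = slp g x (x+h)" for h by (simp add: slp_def)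
  fix a assume a: "a < Dp g x"
  have ne: "slp g x ` {x<..<2*pi} \<noteq> {}" using x by auto
  from less_cSupD[OF ne a[unfolded Dp_def]] obtain s where "s \<in> slp g x ` {x<..<2*pi}" "a < s" by blast
  then obtain y where y: "x < y" "y < 2*pi" "a < slp g x y" by auto
  have "eventually (\<lambda>h. h \<in> {0<..<y - x}) (at_right 0)" using y by (intro eventually_at_right_real) auto
  thus "eventually (\<lambda>h. a < (g (x+h) - g x) / h) (at_right 0)"
  proof (rule eventually_mono)
    fix h assume h: "h \<in> {0<..<y - x}"
    have h': "0 < h" "h < y - x" using h by auto
    have "slp g x y < slp g x (x+h)" by (rule sc_chord(1)[OF sc x(1)]) (use h' y in auto)
    thus "a < (g (x+h) - g x) / h" using y(3) q[of h] by linarith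
  qed
next
  have q: "(g (x+h) - g x) / h = slp g x (x+h)" for h by (simp add: slp_def)
  fix a assume a: "Dp g x < a"
  have "eventually (\<lambda>h. h \<in> {0<..<2*pi - x}) (at_right 0)" using x by (intro eventually_at_right_real) auto
  thus "eventually (\<lambda>h. (g (x+h) - g x) / h < a) (at_right 0)"
  proof (rule eventually_mono)
    fix h assume h: "h \<in> {0<..<2*pi - x}"
    have h': "0 < h" "h < 2*pi - x" using h by auto
    have "slp g x (x+h) < Dp g x" by (rule Dp_gt[OF sc x(1)]) (use h' in auto)
    thus "(g (x+h) - g x) / h < a" using a q[of h] by linarith
  qed
qed

lemma Dm_tendsto:
  assumes sc: "strictly_concave_on {0<..<2*pi} g" and x: "0 < x" "x < 2*pi"
  shows "((\<lambda>h. (g (x+h) - g x) / h) \<longlongrightarrow> Dm g x) (at_left 0)"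
proof (rule order_tendstoI)
  have q: "h \<noteq> 0 \<Longrightarrow> (g (x+h) - g x) / h = slp g (x+h) x" for h
    by (simp add: slp_def) (simp add: field_simps)
  fix a assume a: "a < Dm g x"
  have "eventually (\<lambda>h. h \<in> {-x<..<0}) (at_left 0)" using x by (intro eventually_at_left_real) auto
  thus "eventually (\<lambda>h. a < (g (x+h) - g x) / h) (at_left 0)"
  proof (rule eventually_mono)
    fix h assume h: "h \<in> {-x<..<0}"
    have h': "-x < h" "h < 0" using h by auto
    have "Dm g x < slp g (x+h) x" by (rule Dm_lt[OF sc x(2)]) (use h' in auto)
    thus "a < (g (x+h) - g x) / h" using a q[of h] h' by auto
  qed
next
  have q: "h \<noteq> 0 \<Longrightarrow> (g (x+h) - g x) / h = slp g (x+h) x" for h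
    by (simp add: slp_def) (simp add: field_simps)
  fix a assume a: "Dm g x < a"
  have ne: "(\<lambda>y. slp g y x) ` {0<..<x} \<noteq> {}" using x by auto
  from cInf_lessD[OF ne a[unfolded Dm_def]] obtain s where "s \<in> (\<lambda>y. slp g y x) ` {0<..<x}" "s < a" by blast
  then obtain y where y: "0 < y" "y < x" "slp g y x < a" by auto
  have "eventually (\<lambda>h. h \<in> {y - x<..<0}) (at_left 0)" using y by (intro eventually_at_left_real) auto
  thus "eventually (\<lambda>h. (g (x+h) - g x) / h < a) (at_left 0)"
  proof (rule eventually_mono)
    fix h assume h: "h \<in> {y - x<..<0}"
    have h': "y - x < h" "h < 0" using h by auto
    have "slp g (x+h) x < slp g y x" by (rule sc_chord(2)[OF sc y(1)]) (use h' y x in auto)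
    thus "(g (x+h) - g x) / h < a" using y(3) q[of h] h' by auto
  qed
qed

lemma sc_isCont:
  assumes sc: "strictly_concave_on {0<..<2*pi} g" and x: "0 < x" "x < 2*pi"
  shows "isCont g x"
proof -
  have e: "g (x + h) = g x + h * ((g (x+h) - g x) / h)" if "h \<noteq> 0" for h using that by simp
  have r: "((\<lambda>h. g x + h * ((g (x+h) - g x) / h)) \<longlongrightarrow> g x + 0 * Dp g x) (at_right 0)"
    by (intro tendsto_intros Dp_tendsto[OF sc x]) 
  have l: "((\<lambda>h. g x + h * ((g (x+h) - g x) / h)) \<longlongrightarrow> g x + 0 * Dm g x) (at_left 0)"
    by (intro tendsto_intros Dm_tendsto[OF sc x])
  have r': "((\<lambda>h. g (x + h)) \<longlongrightarrow> g x) (at_right 0)"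
    by (rule tendsto_cong[THEN iffD1, OF _ r[simplified]]) (use e in \<open>auto simp: eventually_at_filter\<close>)
  have l': "((\<lambda>h. g (x + h)) \<longlongrightarrow> g x) (at_left 0)"
    by (rule tendsto_cong[THEN iffD1, OF _ l[simplified]]) (use e in \<open>auto simp: eventually_at_filter\<close>)
  show ?thesis unfolding isCont_iff by (rule filterlim_split_at[OF l' r'])
qed



lemma sck_ck: "strictly_concave_kernel K \<Longrightarrow> concave_kernel K"
  by (simp add: strictly_concave_kernel_def)

lemma sck_sc: "strictly_concave_kernel K \<Longrightarrow> strictly_concave_on {0<..<2*pi} (kr K)"
  by (simp add: strictly_concave_kernel_def)

lemma kper: "strictly_concave_kernel K \<Longrightarrow> K (t + 2*pi) = K t"
  unfolding strictly_concave_kernel_def concave_kernel_def by blast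

lemma kper_nat: assumes "strictly_concave_kernel K" shows "K (t + 2*pi * real m) = K t"
proof (induction m)
  case (Suc m)
  have "K (t + 2*pi * real (Suc m)) = K ((t + 2*pi * real m) + 2*pi)" by (simp add: algebra_simps)
  also have "\<dots> = K (t + 2*pi * real m)" by (rule kper[OF assms])
  finally show ?case using Suc by simp
qed simp

lemma kper_int: assumes "strictly_concave_kernel K" shows "K (t + 2*pi * of_int m) = K t"
proof (cases "m \<ge> 0")
  case True
  define k where "k = nat m"
  have "m = int k" using True by (simp add: k_def)
  thus ?thesis using kper_nat[OF assms] by simp
next
  case False
  define k where "k = nat (- m)"
  have k: "m = - int k" using False by (simp add: k_def)
  have "K t = K ((t + 2*pi * of_int m) + 2*pi * real k)" using k by simp
  also have "\<dots> = K (t + 2*pi * of_int m)" by (rule kper_nat[OF assms])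
  finally show ?thesis by simp
qed

lemma kfin: assumes "strictly_concave_kernel K" "0 < t" "t < 2*pi"
  shows "K t = ereal (kr K t)"
  using assms by (auto simp: strictly_concave_kernel_def concave_kernel_def kr_def ereal_real')

lemma kL: assumes "strictly_concave_kernel K"
  obtains L where "L \<noteq> \<infinity>" "(K \<longlongrightarrow> L) (at_right 0)" "(K \<longlongrightarrow> L) (at_left (2 * pi))" "K 0 = L"
  using assms by (auto simp: strictly_concave_kernel_def concave_kernel_def)

definition red :: "real \<Rightarrow> real" where "red t = t - 2*pi * of_int \<lfloor>t / (2*pi)\<rfloor>"

lemma red_bounds: "0 \<le> red t" "red t < 2*pi"
proof -
  have p: "(2*pi::real) > 0" by simp
  show "0 \<le> red t" using floor_divide_lower[OF p, of t] by (simp add: red_def algebra_simps)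
  show "red t < 2*pi" using floor_divide_upper[OF p, of t] by (simp add: red_def algebra_simps)
qed

lemma kred: assumes "strictly_concave_kernel K" shows "K t = K (red t)"
  using kper_int[OF assms, of "red t" "\<lfloor>t / (2*pi)\<rfloor>"] by (simp add: red_def)

lemma knotinf: assumes "strictly_concave_kernel K" shows "K t \<noteq> \<infinity>"
proof -
  obtain L where L: "L \<noteq> \<infinity>" "K 0 = L" using kL[OF assms] by metis
  show ?thesis
  proof (cases "red t = 0")
    case True thus ?thesis using kred[OF assms, of t] L by simp
  next
    case False
    hence "0 < red t" using red_bounds(1)[of t] by simp
    thus ?thesis using kred[OF assms, of t] kfin[OF assms, of "red t"] red_bounds(2)[of t] by simp
  qed
qed

lemma kcont_in: assumes "strictly_concave_kernel K" "0 < t" "t < 2*pi" shows "isCont K t"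
proof -
  have "isCont (\<lambda>x. ereal (kr K x)) t"
    using sc_isCont[OF sck_sc[OF assms(1)] assms(2,3)] by (intro continuous_intros)
  moreover have "eventually (\<lambda>x. K x = ereal (kr K x)) (nhds t)"
    using eventually_nhds_in_open[of "{0<..<2*pi}" t] assms
    by (auto elim!: eventually_mono intro: kfin[OF assms(1)])
  ultimately show ?thesis using isCont_cong[of K "\<lambda>x. ereal (kr K x)" t] by simp
qed

lemma kcont0: assumes "strictly_concave_kernel K" shows "isCont K 0"
proof -
  obtain L where L: "L \<noteq> \<infinity>" "(K \<longlongrightarrow> L) (at_right 0)" "(K \<longlongrightarrow> L) (at_left (2 * pi))" "K 0 = L"
    using kL[OF assms] by metis
  have l: "(K \<longlongrightarrow> L) (at_left 0)"
  proof (rule topological_tendstoI)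
    fix S assume S: "open S" "L \<in> S"
    have "eventually (\<lambda>x. K x \<in> S) (at_left (2*pi))" using L(3) S by (rule topological_tendstoD)
    then obtain b where b: "b < 2*pi" "\<forall>y>b. y < 2*pi \<longrightarrow> K y \<in> S"
      by (auto simp: eventually_at_left_field)
    show "eventually (\<lambda>x. K x \<in> S) (at_left 0)"
      unfolding eventually_at_left_field
    proof (intro exI[of _ "b - 2*pi"] conjI allI impI)
      fix y assume "y > b - 2*pi" "y < 0"
      hence "K (y + 2*pi) \<in> S" using b by auto
      thus "K y \<in> S" using kper[OF assms] by simp
    qed (use b in auto)
  qed
  show ?thesis unfolding isCont_def using filterlim_split_at[OF l L(2)] L(4) by simp
qed

lemma kcont: assumes "strictly_concave_kernel K" shows "isCont K t"
proof -
  define m where "m = \<lfloor>t / (2*pi)\<rfloor>"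
  have r: "red t = t - 2*pi * of_int m" by (simp add: red_def m_def)
  have "isCont K (red t)"
  proof (cases "red t = 0")
    case True thus ?thesis using kcont0[OF assms] by simp
  next
    case False thus ?thesis using kcont_in[OF assms, of "red t"] red_bounds[of t] by simp
  qed
  moreover have c1: "isCont (\<lambda>x. x - 2*pi * of_int m) t" by (intro continuous_intros)
  ultimately have "isCont (K \<circ> (\<lambda>x. x - 2*pi * of_int m)) t"
    using continuous_at_compose[OF c1, of K] r by simp
  hence "isCont (\<lambda>x. K (x - 2*pi * of_int m)) t" by (simp add: comp_def)
  moreover have "(\<lambda>x. K (x - 2*pi * of_int m)) = K"
  proof
    fix x show "K (x - 2*pi * of_int m) = K x" using kper_int[OF assms, of "x - 2*pi * of_int m" m] by simp
  qed
  ultimately show ?thesis by simp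
qed

lemma kr_right0: assumes "strictly_concave_kernel K" "K 0 = ereal l"
  shows "(kr K \<longlongrightarrow> l) (at_right 0)" "(kr K \<longlongrightarrow> l) (at_left (2*pi))"
proof -
  obtain L where L: "(K \<longlongrightarrow> L) (at_right 0)" "(K \<longlongrightarrow> L) (at_left (2 * pi))" "K 0 = L"
    using kL[OF assms(1)] by metis
  have "(K \<longlongrightarrow> ereal l) (at_right 0)" "(K \<longlongrightarrow> ereal l) (at_left (2*pi))"
    using L assms(2) by simp_all
  from lim_real_of_ereal[OF this(1)] lim_real_of_ereal[OF this(2)]
  show "(kr K \<longlongrightarrow> l) (at_right 0)" "(kr K \<longlongrightarrow> l) (at_left (2*pi))"
    unfolding kr_def[abs_def] by auto
qed



lemma tendsto_sum_ereal':
  fixes f :: "'i \<Rightarrow> 'a \<Rightarrow> ereal"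
  assumes "finite S" "\<And>i. i \<in> S \<Longrightarrow> (f i \<longlongrightarrow> a i) F" "\<And>i. i \<in> S \<Longrightarrow> a i \<noteq> \<infinity>"
  shows "((\<lambda>x. \<Sum>i\<in>S. f i x) \<longlongrightarrow> (\<Sum>i\<in>S. a i)) F"
  using assms
proof (induction S rule: finite_induct)
  case empty thus ?case by simp
next
  case (insert i S)
  have s: "(\<Sum>i\<in>S. a i) \<noteq> \<infinity>" using insert by (simp add: sum_Pinfty)
  have "((\<lambda>x. f i x + (\<Sum>i\<in>S. f i x)) \<longlongrightarrow> a i + (\<Sum>i\<in>S. a i)) F"
    by (rule tendsto_add_ereal_general) (use insert s in auto)
  thus ?case using insert by simp
qed

lemma sum_ereal_real:
  fixes f :: "'i \<Rightarrow> ereal"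
  assumes "\<And>i. i \<in> S \<Longrightarrow> f i = ereal (g i)"
  shows "sum f S = ereal (sum g S)"
proof -
  have "sum f S = (\<Sum>i\<in>S. ereal (g i))" by (rule sum.cong) (use assms in auto)
  thus ?thesis by simp
qed

lemma sum_ereal_notMInf:
  fixes f :: "'i \<Rightarrow> ereal"
  assumes "finite S" "\<And>i. i \<in> S \<Longrightarrow> f i \<noteq> \<infinity>" "sum f S \<noteq> -\<infinity>" "i \<in> S"
  shows "f i \<noteq> -\<infinity>"
  using assms
proof (induction S rule: finite_induct)
  case empty thus ?case by simp
next
  case (insert k S)
  have s: "sum f S \<noteq> \<infinity>" using insert by (simp add: sum_Pinfty)
  have fk: "f k \<noteq> \<infinity>" using insert by simp
  have ne: "f k \<noteq> -\<infinity> \<and> sum f S \<noteq> -\<infinity>"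
  proof (rule ccontr)
    assume "\<not> (f k \<noteq> -\<infinity> \<and> sum f S \<noteq> -\<infinity>)"
    hence "f k + sum f S = -\<infinity>" using s fk by auto
    thus False using insert by simp
  qed
  show ?case using insert ne by auto
qed

definition nd :: "(nat \<Rightarrow> real) \<Rightarrow> nat \<Rightarrow> real" where
  "nd y j = (if j = 0 then 0 else y j)"

lemma Fsum_alt: "Fsum n K y t = (\<Sum>j\<in>{0..n}. K j (t - nd y j))"
proof -
  have "(\<Sum>j\<in>{0..n}. K j (t - nd y j)) = K 0 (t - nd y 0) + (\<Sum>j\<in>{Suc 0..n}. K j (t - nd y j))"
    by (rule sum.atLeast_Suc_atMost) simp
  also have "(\<Sum>j\<in>{Suc 0..n}. K j (t - nd y j)) = (\<Sum>j\<in>{1..n}. K j (t - y j))"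
    by (rule sum.cong) (auto simp: nd_def)
  finally show ?thesis by (simp add: Fsum_def nd_def)
qed

locale kset =
  fixes n :: nat and K :: "nat \<Rightarrow> real \<Rightarrow> ereal"
  assumes kern: "\<forall>j\<in>{0..n}. strictly_concave_kernel (K j)"
begin

lemma sck: "j \<in> {0..n} \<Longrightarrow> strictly_concave_kernel (K j)" using kern by blast

lemma Fsum_notinf: "Fsum n K y t \<noteq> \<infinity>"
  unfolding Fsum_alt by (simp add: sum_Pinfty knotinf[OF sck])

lemma Fsum_isCont_gen:
  fixes tt :: "'a::t2_space \<Rightarrow> real"
  assumes "isCont tt xa" "\<And>j. isCont (\<lambda>x. yy x j) xa"
  shows "isCont (\<lambda>x. Fsum n K (yy x) (tt x)) xa"
proof -
  have c: "isCont (\<lambda>x. K j (tt x - nd (yy x) j)) xa" if j: "j \<in> {0..n}" for j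
  proof -
    have c1: "isCont (\<lambda>x. tt x - nd (yy x) j) xa"
      using assms by (cases "j = 0") (auto simp: nd_def intro!: continuous_intros)
    show ?thesis using continuous_at_compose[OF c1 kcont[OF sck[OF j]]] by (simp add: comp_def)
  qed
  show ?thesis unfolding Fsum_alt isCont_def
    by (rule tendsto_sum_ereal') (use c knotinf[OF sck] in \<open>auto simp: isCont_def\<close>)
qed

lemma Fsum_isCont_t: "isCont (Fsum n K y) t"
  using Fsum_isCont_gen[where tt="\<lambda>x. x" and xa=t and yy="\<lambda>x. y"] by simp

lemma Fsum_per_t: "Fsum n K y (t + 2*pi) = Fsum n K y t"
  unfolding Fsum_alt
  by (rule sum.cong) (use kper[OF sck, of _ "t - nd y _"] in \<open>auto simp: algebra_simps\<close>)

lemma Fsum_per_int: "Fsum n K y (t + 2*pi * of_int m) = Fsum n K y t"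
  unfolding Fsum_alt
  by (rule sum.cong) (use kper_int[OF sck, of _ "t - nd y _" m] in \<open>auto simp: algebra_simps\<close>)

lemma Fsum_red: "Fsum n K y t = Fsum n K y (red t)"
  using Fsum_per_int[of y "red t" "\<lfloor>t / (2*pi)\<rfloor>"] by (simp add: red_def)

lemma Fsum_shift:
  assumes "\<And>j. j \<in> {1..n} \<Longrightarrow> \<exists>m::int. y' j = y j + 2*pi * of_int m"
  shows "Fsum n K y' t = Fsum n K y t"
  unfolding Fsum_alt
proof (rule sum.cong)
  fix j assume j: "j \<in> {0..n}"
  show "K j (t - nd y' j) = K j (t - nd y j)"
  proof (cases "j = 0")
    case True thus ?thesis by (simp add: nd_def)
  next
    case False
    then obtain m :: int where m: "y' j = y j + 2*pi * of_int m" using assms j by fastforce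
    have "K j (t - nd y' j) = K j ((t - nd y' j) + 2*pi * of_int m)" by (rule kper_int[OF sck[OF j], symmetric])
    also have "(t - nd y' j) + 2*pi * of_int m = t - nd y j" using m False by (simp add: nd_def)
    finally show ?thesis .
  qed
qed simp

definition Msup :: "(nat \<Rightarrow> real) \<Rightarrow> ereal" where
  "Msup y = (SUP t\<in>{0..2*pi}. Fsum n K y t)"

lemma Fsum_le_Msup: "Fsum n K y t \<le> Msup y"
proof -
  have "Fsum n K y (red t) \<le> Msup y" unfolding Msup_def
    by (rule SUP_upper) (use red_bounds[of t] in auto)
  thus ?thesis using Fsum_red by simp
qed

lemma Msup_attained: obtains t where "t \<in> {0..2*pi}" "Fsum n K y t = Msup y"
proof -
  have "continuous_on {0..2*pi} (Fsum n K y)"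
    by (intro continuous_at_imp_continuous_on ballI Fsum_isCont_t)
  then obtain t where t: "t \<in> {0..2*pi}" "\<forall>s\<in>{0..2*pi}. Fsum n K y s \<le> Fsum n K y t"
    using continuous_attains_sup[of "{0..2*pi}" "Fsum n K y"] by auto
  have "Msup y \<le> Fsum n K y t" unfolding Msup_def by (rule SUP_least) (use t in auto)
  hence "Fsum n K y t = Msup y" using Fsum_le_Msup[of y t] by simp
  thus ?thesis using t that by blast
qed

end



abbreviation zz :: "nat \<Rightarrow> (nat \<Rightarrow> real) \<Rightarrow> (nat \<Rightarrow> nat) \<Rightarrow> nat \<Rightarrow> real" where
  "zz n y \<sigma> k \<equiv> node n y (ext_perm n \<sigma> k)"

lemma node_in: "j \<in> {1..n} \<Longrightarrow> node n y j = y j" by (simp add: node_def)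

lemma zz_0: "zz n y \<sigma> 0 = 0" by (simp add: node_def ext_perm_def)
lemma zz_last: "zz n y \<sigma> (n+1) = 2*pi" by (simp add: node_def ext_perm_def)
lemma zz_mid: "\<sigma> permutes {1..n} \<Longrightarrow> k \<in> {1..n} \<Longrightarrow> zz n y \<sigma> k = y (\<sigma> k) \<and> \<sigma> k \<in> {1..n}"
proof -
  assume s: "\<sigma> permutes {1..n}" and k: "k \<in> {1..n}"
  have sk: "\<sigma> k \<in> {1..n}" using permutes_in_image[OF s] k by simp
  have "ext_perm n \<sigma> k = \<sigma> k" using k by (simp add: ext_perm_def)
  thus ?thesis using sk by (simp add: node_def)
qed

lemma zz_range:
  assumes y: "y \<in> torus n" and s: "\<sigma> permutes {1..n}" and k: "k \<le> n+1"
  shows "0 \<le> zz n y \<sigma> k" "zz n y \<sigma> k \<le> 2*pi"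
proof -
  have "(0 \<le> zz n y \<sigma> k \<and> zz n y \<sigma> k \<le> 2*pi)"
  proof (cases "k = 0 \<or> k = n+1")
    case True thus ?thesis using zz_0[of n y \<sigma>] zz_last[of n y \<sigma>] by auto
  next
    case False
    hence "k \<in> {1..n}" using k by auto
    thus ?thesis using zz_mid[OF s, of k y] y by (auto simp: torus_def less_imp_le)
  qed
  thus "0 \<le> zz n y \<sigma> k" "zz n y \<sigma> k \<le> 2*pi" by auto
qed

lemma zz_mono:
  assumes a: "admissible n y \<sigma>" and ij: "i \<le> j" "j \<le> n+1"
  shows "zz n y \<sigma> i \<le> zz n y \<sigma> j"
  using ij
proof (induction j)
  case 0 thus ?case by simp
next
  case (Suc j)
  show ?case
  proof (cases "i = Suc j")
    case True thus ?thesis by simp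
  next
    case False
    hence "zz n y \<sigma> i \<le> zz n y \<sigma> j" using Suc by simp
    also have "zz n y \<sigma> j \<le> zz n y \<sigma> (j + 1)" using a Suc.prems unfolding admissible_def by auto
    finally show ?thesis by simp
  qed
qed

lemma adm_exists:
  assumes y: "y \<in> torus n"
  shows "\<exists>\<sigma>. admissible n y \<sigma>"
proof -
  define xs where "xs = sort_key y [1..<Suc n]"
  have len: "length xs = n" by (simp add: xs_def)
  have setxs: "set xs = {1..n}" by (auto simp: xs_def)
  have dist: "distinct xs" by (simp add: xs_def)
  have sorted: "sorted (map y xs)" by (simp add: xs_def)
  define \<sigma> where "\<sigma> i = (if i \<in> {1..n} then xs ! (i - 1) else i)" for i
  have inj: "inj_on \<sigma> {1..n}"
  proof (rule inj_onI)
    fix a b assume ab: "a \<in> {1..n}" "b \<in> {1..n}" "\<sigma> a = \<sigma> b"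
    hence "xs ! (a - 1) = xs ! (b - 1)" by (simp add: \<sigma>_def)
    hence "a - 1 = b - 1" using nth_eq_iff_index_eq[OF dist, of "a - 1" "b - 1"] ab len by auto
    thus "a = b" using ab by auto
  qed
  have sub: "\<sigma> ` {1..n} \<subseteq> {1..n}"
  proof
    fix x assume "x \<in> \<sigma> ` {1..n}"
    then obtain i where i: "i \<in> {1..n}" "x = \<sigma> i" by auto
    hence "x = xs ! (i - 1)" by (simp add: \<sigma>_def)
    moreover have "i - 1 < length xs" using i len by auto
    ultimately have "x \<in> set xs" by simp
    thus "x \<in> {1..n}" using setxs by simp
  qed
  have "\<sigma> ` {1..n} = {1..n}" using endo_inj_surj[OF _ sub inj] by simp
  hence bij: "bij_betw \<sigma> {1..n} {1..n}" using inj by (simp add: bij_betw_def)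
  have perm: "\<sigma> permutes {1..n}" by (rule bij_imp_permutes[OF bij]) (auto simp: \<sigma>_def)
  have "admissible n y \<sigma>" unfolding admissible_def
  proof (intro conjI perm ballI)
    fix k assume k: "k \<in> {0..n}"
    show "zz n y \<sigma> k \<le> zz n y \<sigma> (k + 1)"
    proof (cases "k = 0")
      case True thus ?thesis using zz_range[OF y perm, of "k+1"] k by (simp add: zz_0)
    next
      case k0: False
      show ?thesis
      proof (cases "k = n")
        case True
        have "zz n y \<sigma> k = y (\<sigma> k)" "\<sigma> k \<in> {1..n}" using zz_mid[OF perm, of k y] k k0 by auto
        hence "zz n y \<sigma> k < 2*pi" using y by (auto simp: torus_def)
        thus ?thesis using True zz_last[of n y \<sigma>] by simp
      next
        case False
        have k1: "k \<in> {1..n}" "k + 1 \<in> {1..n}" using k k0 False by auto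
        have e1: "zz n y \<sigma> k = y (xs ! (k - 1))" using zz_mid[OF perm k1(1), of y] k1 by (simp add: \<sigma>_def)
        have e2: "zz n y \<sigma> (k+1) = y (xs ! k)" using zz_mid[OF perm k1(2), of y] k1 by (simp add: \<sigma>_def)
        have "(map y xs) ! (k - 1) \<le> (map y xs) ! k"
          by (rule sorted_nth_mono[OF sorted]) (use k1 len in auto)
        thus ?thesis using e1 e2 k1 len by simp
      qed
    qed
  qed
  thus ?thesis by blast
qed

lemma arc_cover:
  assumes a: "admissible n y \<sigma>" and t: "t \<in> {0..2*pi}"
  shows "\<exists>k\<in>{0..n}. zz n y \<sigma> k \<le> t \<and> t \<le> zz n y \<sigma> (k+1)"
proof -
  define S where "S = {i \<in> {0..n}. zz n y \<sigma> i \<le> t}"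
  have fin: "finite S" and ne: "0 \<in> S" using t by (auto simp: S_def zz_0)
  define k where "k = Max S"
  have kS: "k \<in> S" using fin ne by (auto simp: k_def intro!: Max_in)
  have "t \<le> zz n y \<sigma> (k+1)"
  proof (cases "k = n")
    case True thus ?thesis using t zz_last[of n y \<sigma>] by simp
  next
    case False
    hence "k + 1 \<in> {0..n}" using kS by (auto simp: S_def)
    moreover have "k + 1 \<notin> S" using Max_ge[OF fin, of "k+1"] by (auto simp: k_def)
    ultimately show ?thesis by (auto simp: S_def)
  qed
  thus ?thesis using kS by (auto simp: S_def)
qed

context kset begin

lemma m_upper_Msup:
  assumes y: "y \<in> torus n"
  shows "m_upper n K y = Msup y"
proof -
  define \<sigma> where "\<sigma> = (SOME \<sigma>. admissible n y \<sigma>)"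
  have a: "admissible n y \<sigma>" unfolding \<sigma>_def using adm_exists[OF y] by (rule someI_ex)
  have perm: "\<sigma> permutes {1..n}" using a by (simp add: admissible_def)
  have mu: "m_upper n K y = Max (m_arc n K y \<sigma> ` {0..n})" by (simp add: m_upper_def \<sigma>_def Let_def)
  have ne: "m_arc n K y \<sigma> ` {0..n} \<noteq> {}" by simp
  have le: "m_arc n K y \<sigma> k \<le> Msup y" if k: "k \<in> {0..n}" for k
    unfolding m_arc_def Msup_def
    by (rule SUP_subset_mono) (use zz_range[OF y perm, of k] zz_range[OF y perm, of "k+1"] k in auto)
  have A: "Max (m_arc n K y \<sigma> ` {0..n}) \<le> Msup y" using le by (subst Max_le_iff) auto
  have B: "Msup y \<le> Max (m_arc n K y \<sigma> ` {0..n})"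
    unfolding Msup_def
  proof (rule SUP_least)
    fix t assume t: "t \<in> {0..2*pi}"
    obtain k where k: "k \<in> {0..n}" "zz n y \<sigma> k \<le> t" "t \<le> zz n y \<sigma> (k+1)"
      using arc_cover[OF a t] by blast
    have "Fsum n K y t \<le> m_arc n K y \<sigma> k" unfolding m_arc_def by (rule SUP_upper) (use k in auto)
    also have "\<dots> \<le> Max (m_arc n K y \<sigma> ` {0..n})" using k by (intro Max_ge) auto
    finally show "Fsum n K y t \<le> Max (m_arc n K y \<sigma> ` {0..n})" .
  qed
  show ?thesis unfolding mu using antisym[OF A B] .
qed

end



lemma Dm_lt_Dp:
  assumes sc: "strictly_concave_on {0<..<2*pi} g" and "0 < x" "x < y" "y < 2*pi"
  shows "Dm g y < Dp g x"
proof -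
  have "Dm g y < slp g x y" by (rule Dm_lt[OF sc]) (use assms in auto)
  also have "\<dots> < Dp g x" by (rule Dp_gt[OF sc]) (use assms in auto)
  finally show ?thesis .
qed

lemma Dm_anti:
  assumes sc: "strictly_concave_on {0<..<2*pi} g" and "0 < x" "x \<le> y" "y < 2*pi"
  shows "Dm g y \<le> Dm g x"
proof (cases "x = y")
  case False
  hence "Dm g y < Dp g x" using Dm_lt_Dp[OF sc, of x y] assms by auto
  also have "\<dots> \<le> Dm g x" using Dp_le_Dm[OF sc, of x] assms by auto
  finally show ?thesis by simp
qed simp

lemma Dp_anti:
  assumes sc: "strictly_concave_on {0<..<2*pi} g" and "0 < x" "x \<le> y" "y < 2*pi"
  shows "Dp g y \<le> Dp g x"
proof (cases "x = y")
  case False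
  have "Dp g y \<le> Dm g y" using Dp_le_Dm[OF sc, of y] assms by auto
  also have "\<dots> < Dp g x" using Dm_lt_Dp[OF sc, of x y] assms False by auto
  finally show ?thesis by simp
qed simp

lemma L1:
  assumes sc: "strictly_concave_on {0<..<2*pi} g" and lim: "(g \<longlongrightarrow> l) (at_right 0)"
    and h: "0 < h" "h < 2*pi"
  shows "h * Dm g h \<le> g h - l"
proof -
  have e0: "eventually (\<lambda>u. u \<in> {0<..<h}) (at_right 0)" by (rule eventually_at_right_real) (use h in simp)
  have ev: "eventually (\<lambda>u. 0 \<le> g h - g u - (h - u) * Dm g h) (at_right 0)"
  proof (rule eventually_mono[OF e0])
    fix u assume u: "u \<in> {0<..<h}"
    have "Dm g h < slp g u h" by (rule Dm_lt[OF sc]) (use u h in auto)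
    hence "Dm g h * (h - u) < (g h - g u)" using u by (simp add: slp_def field_simps)
    thus "0 \<le> g h - g u - (h - u) * Dm g h" by (simp add: algebra_simps)
  qed
  have "((\<lambda>u. g h - g u - (h - u) * Dm g h) \<longlongrightarrow> g h - l - (h - 0) * Dm g h) (at_right 0)"
    by (intro tendsto_intros lim)
  from tendsto_lowerbound[OF this ev] show ?thesis by simp
qed

lemma L2:
  assumes sc: "strictly_concave_on {0<..<2*pi} g" and lim: "(g \<longlongrightarrow> l) (at_left (2*pi))"
    and h: "0 < h" "h < 2*pi"
  shows "- h * Dp g (2*pi - h) \<le> g (2*pi - h) - l"
proof -
  have e0: "eventually (\<lambda>u. u \<in> {2*pi - h<..<2*pi}) (at_left (2*pi))"
    by (rule eventually_at_left_real) (use h in simp)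
  have ev: "eventually (\<lambda>u. g u - g (2*pi - h) - (u - (2*pi - h)) * Dp g (2*pi - h) \<le> 0) (at_left (2*pi))"
  proof (rule eventually_mono[OF e0])
    fix u assume u: "u \<in> {2*pi - h<..<2*pi}"
    have "slp g (2*pi - h) u < Dp g (2*pi - h)" by (rule Dp_gt[OF sc]) (use u h in auto)
    hence "g u - g (2*pi - h) < Dp g (2*pi - h) * (u - (2*pi - h))" using u by (simp add: slp_def field_simps)
    thus "g u - g (2*pi - h) - (u - (2*pi - h)) * Dp g (2*pi - h) \<le> 0" by (simp add: algebra_simps)
  qed
  have "((\<lambda>u. g u - g (2*pi - h) - (u - (2*pi - h)) * Dp g (2*pi - h)) \<longlongrightarrow>
      l - g (2*pi - h) - (2*pi - (2*pi - h)) * Dp g (2*pi - h)) (at_left (2*pi))"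
    by (intro tendsto_intros lim)
  from tendsto_upperbound[OF this ev] show ?thesis by (simp add: algebra_simps)
qed

lemma L3:
  assumes sc: "strictly_concave_on {0<..<2*pi} g" and h: "0 < h" "0 < q - h" "q + h < 2*pi"
  shows "h * Dm g (q + h) \<le> g (q + h) - g q" "- h * Dp g (q - h) \<le> g (q - h) - g q"
proof -
  have "Dm g (q + h) < slp g q (q + h)" by (rule Dm_lt[OF sc]) (use h in auto)
  thus "h * Dm g (q + h) \<le> g (q + h) - g q" using h by (simp add: slp_def field_simps)
  have "slp g (q - h) q < Dp g (q - h)" by (rule Dp_gt[OF sc]) (use h in auto)
  thus "- h * Dp g (q - h) \<le> g (q - h) - g q" using h by (simp add: slp_def field_simps)
qed

lemma Jpos:
  assumes sc: "strictly_concave_on {0<..<2*pi} g" and h: "0 < h" "h < pi"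
  shows "0 < Dm g h - Dp g (2*pi - h)"
proof -
  have "Dp g (2*pi - h) \<le> Dm g (2*pi - h)" using Dp_le_Dm[OF sc, of "2*pi - h"] h by auto
  also have "\<dots> < Dp g h" using Dm_lt_Dp[OF sc, of h "2*pi - h"] h by auto
  also have "\<dots> \<le> Dm g h" using Dp_le_Dm[OF sc, of h] h by auto
  finally show ?thesis by simp
qed

lemma Dpm_deriv:
  assumes sc: "strictly_concave_on {0<..<2*pi} g" and x: "0 < x" "x < 2*pi"
    and d: "(g has_real_derivative k) (at x)"
  shows "Dp g x = k" "Dm g x = k"
proof -
  have "((\<lambda>h. (g (x + h) - g x) / h) \<longlongrightarrow> k) (at 0)" using d by (simp add: DERIV_def)
  hence r: "((\<lambda>h. (g (x + h) - g x) / h) \<longlongrightarrow> k) (at_right 0)"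
    and l: "((\<lambda>h. (g (x + h) - g x) / h) \<longlongrightarrow> k) (at_left 0)"
    by (simp_all add: filterlim_at_split)
  show "Dp g x = k" using tendsto_unique[OF _ Dp_tendsto[OF sc x] r] by simp
  show "Dm g x = k" using tendsto_unique[OF _ Dm_tendsto[OF sc x] l] by simp
qed

lemma Dplus_eq: 
  assumes sc: "strictly_concave_on {0<..<2*pi} g" and x: "0 < x" "x < 2*pi"
  shows "Dplus g x = Dp g x" "Dminus g x = Dm g x"
  unfolding Dplus_def Dminus_def
  by (rule tendsto_Lim[OF _ Dp_tendsto[OF sc x]], simp) (rule tendsto_Lim[OF _ Dm_tendsto[OF sc x]], simp)



definition SJ :: "(nat \<Rightarrow> real \<Rightarrow> real) \<Rightarrow> nat set \<Rightarrow> real \<Rightarrow> real" where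
  "SJ g J h = (\<Sum>j\<in>J. Dm (g j) h - Dp (g j) (2*pi - h))"
definition SO :: "(nat \<Rightarrow> real \<Rightarrow> real) \<Rightarrow> nat set \<Rightarrow> (nat \<Rightarrow> real) \<Rightarrow> real \<Rightarrow> real" where
  "SO g Ob q h = (\<Sum>j\<in>Ob. Dm (g j) (q j + h) - Dp (g j) (q j - h))"

locale kinkset =
  fixes g :: "nat \<Rightarrow> real \<Rightarrow> real" and J Ob :: "nat set" and q l :: "nat \<Rightarrow> real" and h0 :: real
  assumes finJ: "finite J" and finO: "finite Ob" and Jne: "J \<noteq> {}"
    and sc: "\<And>j. j \<in> J \<union> Ob \<Longrightarrow> strictly_concave_on {0<..<2*pi} (g j)"
    and limr: "\<And>j. j \<in> J \<Longrightarrow> (g j \<longlongrightarrow> l j) (at_right 0)"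
    and liml: "\<And>j. j \<in> J \<Longrightarrow> (g j \<longlongrightarrow> l j) (at_left (2*pi))"
    and qb: "\<And>j. j \<in> Ob \<Longrightarrow> h0 \<le> q j \<and> h0 \<le> 2*pi - q j"
    and h0: "0 < h0" "h0 \<le> pi"
    and ineq: "\<And>h. 0 < h \<Longrightarrow> h < h0 \<Longrightarrow>
       (\<Sum>j\<in>J. g j h + g j (2*pi - h) - 2 * l j) + (\<Sum>j\<in>Ob. g j (q j + h) + g j (q j - h) - 2 * g j (q j)) \<le> 0"
begin

lemma S_le0:
  assumes h: "0 < h" "h < h0"
  shows "SJ g J h + SO g Ob q h \<le> 0"
proof -
  have "h * (SJ g J h + SO g Ob q h) =
      (\<Sum>j\<in>J. h * Dm (g j) h + (- h) * Dp (g j) (2*pi - h)) + (\<Sum>j\<in>Ob. h * Dm (g j) (q j + h) + (-h) * Dp (g j) (q j - h))"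
    by (simp add: SJ_def SO_def sum_distrib_left algebra_simps)
  also have "\<dots> \<le> (\<Sum>j\<in>J. g j h + g j (2*pi - h) - 2 * l j) + (\<Sum>j\<in>Ob. g j (q j + h) + g j (q j - h) - 2 * g j (q j))"
  proof (rule add_mono; rule sum_mono)
    fix j assume j: "j \<in> J"
    have "h * Dm (g j) h \<le> g j h - l j" by (rule L1[OF sc limr]) (use j h h0 in auto)
    moreover have "- h * Dp (g j) (2*pi - h) \<le> g j (2*pi - h) - l j" by (rule L2[OF sc liml]) (use j h h0 in auto)
    ultimately show "h * Dm (g j) h + (- h) * Dp (g j) (2*pi - h) \<le> g j h + g j (2*pi - h) - 2 * l j" by simp
  next
    fix j assume j: "j \<in> Ob"
    have b: "0 < q j - h" "q j + h < 2*pi" using qb[OF j] h by auto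
    show "h * Dm (g j) (q j + h) + (-h) * Dp (g j) (q j - h) \<le> g j (q j + h) + g j (q j - h) - 2 * g j (q j)"
      using L3[OF sc[of j] h(1) b] j by simp
  qed
  also have "\<dots> \<le> 0" by (rule ineq[OF h])
  finally show ?thesis using h by (simp add: mult_le_0_iff)
qed

lemma SJ_mono:
  assumes h: "0 < h" "h \<le> h1" "h1 < pi"
  shows "SJ g J h1 \<le> SJ g J h"
  unfolding SJ_def
proof (rule sum_mono)
  fix j assume j: "j \<in> J"
  have "Dm (g j) h1 \<le> Dm (g j) h" by (rule Dm_anti[OF sc]) (use j h in auto)
  moreover have "Dp (g j) (2*pi - h) \<le> Dp (g j) (2*pi - h1)" by (rule Dp_anti[OF sc]) (use j h in auto)
  ultimately show "Dm (g j) h1 - Dp (g j) (2 * pi - h1) \<le> Dm (g j) h - Dp (g j) (2 * pi - h)" by simp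
qed

lemma SO_mono:
  assumes h: "0 < h" "h \<le> h1" "h1 < h0"
  shows "SO g Ob q h1 \<le> SO g Ob q h"
  unfolding SO_def
proof (rule sum_mono)
  fix j assume j: "j \<in> Ob"
  have b: "h0 \<le> q j" "h0 \<le> 2*pi - q j" using qb[OF j] by auto
  have "Dm (g j) (q j + h1) \<le> Dm (g j) (q j + h)" by (rule Dm_anti[OF sc]) (use j h b in auto)
  moreover have "Dp (g j) (q j - h) \<le> Dp (g j) (q j - h1)" by (rule Dp_anti[OF sc]) (use j h b in auto)
  ultimately show "Dm (g j) (q j + h1) - Dp (g j) (q j - h1) \<le> Dm (g j) (q j + h) - Dp (g j) (q j - h)" by simp
qed

lemma SJ_pos: assumes h: "0 < h" "h < pi" shows "0 < SJ g J h"
  unfolding SJ_def by (rule sum_pos[OF finJ Jne]) (rule Jpos[OF sc], use h in auto)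

lemma SJ_split: assumes j0: "j0 \<in> J" and h: "0 < h" "h < pi"
  shows "Dm (g j0) h - Dp (g j0) (2*pi - h) \<le> SJ g J h"
proof -
  have "SJ g J h = (Dm (g j0) h - Dp (g j0) (2*pi - h)) + (\<Sum>j\<in>J - {j0}. Dm (g j) h - Dp (g j) (2*pi - h))"
    unfolding SJ_def by (rule sum.remove[OF finJ j0])
  moreover have "0 \<le> (\<Sum>j\<in>J - {j0}. Dm (g j) h - Dp (g j) (2*pi - h))"
    by (rule sum_nonneg) (use Jpos[OF sc] h in \<open>auto intro: less_imp_le\<close>)
  ultimately show ?thesis by simp
qed

lemma kink_C1:
  assumes tO: "(SO g Ob q \<longlongrightarrow> 0) (at_right 0)"
  shows False
proof -
  define h1 where "h1 = h0 / 2"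
  have h1: "0 < h1" "h1 < h0" "h1 < pi" using h0 by (auto simp: h1_def)
  define \<beta> where "\<beta> = SJ g J h1"
  have \<beta>: "0 < \<beta>" unfolding \<beta>_def by (rule SJ_pos) (use h1 in auto)
  have "eventually (\<lambda>h. - \<beta> < SO g Ob q h) (at_right 0)" using order_tendstoD(1)[OF tO] \<beta> by simp
  moreover have "eventually (\<lambda>h. h \<in> {0<..<h1}) (at_right 0)" by (rule eventually_at_right_real) (use h1 in simp)
  ultimately have "eventually (\<lambda>h. - \<beta> < SO g Ob q h \<and> h \<in> {0<..<h1}) (at_right 0)" by (rule eventually_conj)
  then obtain h where h: "- \<beta> < SO g Ob q h" "0 < h" "h < h1"
    using eventually_happens[of _ "at_right (0::real)"] by auto
  have "\<beta> \<le> SJ g J h" unfolding \<beta>_def by (rule SJ_mono) (use h h1 in auto)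
  hence "0 < SJ g J h + SO g Ob q h" using h by simp
  thus False using S_le0[of h] h h1 by simp
qed

lemma kink_inf:
  assumes j0: "j0 \<in> J"
    and lim: "filterlim (Dp (g j0)) at_bot (at_left (2*pi)) \<or> filterlim (Dm (g j0)) at_top (at_right 0)"
  shows False
proof -
  define h1 where "h1 = h0 / 2"
  have h1: "0 < h1" "h1 < h0" "h1 < pi" using h0 by (auto simp: h1_def)
  define G where "G = SO g Ob q h1"
  have "\<exists>h. 0 < h \<and> h \<le> h1 \<and> - G < Dm (g j0) h - Dp (g j0) (2*pi - h)"
    using lim
  proof
    assume a: "filterlim (Dp (g j0)) at_bot (at_left (2*pi))"
    define Z where "Z = Dm (g j0) h1 + G - 1"
    have "eventually (\<lambda>x. Dp (g j0) x \<le> Z) (at_left (2*pi))" using a by (simp add: filterlim_at_bot)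
    then obtain b where b: "b < 2*pi" "\<And>y. b < y \<Longrightarrow> y < 2*pi \<Longrightarrow> Dp (g j0) y \<le> Z"
      unfolding eventually_at_left_field by blast
    define h where "h = min h1 (2*pi - b) / 2"
    have m: "min h1 (2*pi - b) \<le> 2*pi - b" "min h1 (2*pi - b) \<le> h1" "0 < min h1 (2*pi - b)" using h1 b by auto
    have hh: "2 * h = min h1 (2*pi - b)" unfolding h_def by simp
    have h: "0 < h" "h \<le> h1" "b < 2*pi - h" using m hh by linarith+
    have "Dp (g j0) (2*pi - h) \<le> Z" using b(2)[of "2*pi - h"] h by simp
    moreover have "Dm (g j0) h1 \<le> Dm (g j0) h" by (rule Dm_anti[OF sc]) (use j0 h h1 in auto)
    ultimately show ?thesis using h by (intro exI[of _ h]) (auto simp: Z_def)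
  next
    assume a: "filterlim (Dm (g j0)) at_top (at_right 0)"
    define Z where "Z = Dp (g j0) (2*pi - h1) - G + 1"
    have "eventually (\<lambda>x. Z \<le> Dm (g j0) x) (at_right 0)" using a by (simp add: filterlim_at_top)
    then obtain b where b: "0 < b" "\<And>y. 0 < y \<Longrightarrow> y < b \<Longrightarrow> Z \<le> Dm (g j0) y"
      unfolding eventually_at_right_field by blast
    define h where "h = min h1 b / 2"
    have m: "min h1 b \<le> b" "min h1 b \<le> h1" "0 < min h1 b" using h1 b by auto
    have hh: "2 * h = min h1 b" unfolding h_def by simp
    have h: "0 < h" "h \<le> h1" "h < b" using m hh by linarith+
    have "Z \<le> Dm (g j0) h" using b(2)[of h] h by simp
    moreover have "Dp (g j0) (2*pi - h) \<le> Dp (g j0) (2*pi - h1)" by (rule Dp_anti[OF sc]) (use j0 h h1 in auto)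
    ultimately show ?thesis using h by (intro exI[of _ h]) (auto simp: Z_def)
  qed
  then obtain h where h: "0 < h" "h \<le> h1" "- G < Dm (g j0) h - Dp (g j0) (2*pi - h)" by blast
  have "G \<le> SO g Ob q h" unfolding G_def by (rule SO_mono) (use h h1 in auto)
  moreover have "Dm (g j0) h - Dp (g j0) (2*pi - h) \<le> SJ g J h" by (rule SJ_split[OF j0]) (use h h1 in auto)
  ultimately have "0 < SJ g J h + SO g Ob q h" using h by simp
  thus False using S_le0[of h] h h1 by simp
qed

end



lemma ereal_fin_eq: "(x::ereal) \<noteq> \<infinity> \<Longrightarrow> x \<noteq> -\<infinity> \<Longrightarrow> x = ereal (real_of_ereal x)"
  by (cases x) auto

context kset begin

lemma nd_range: "w \<in> torus n \<Longrightarrow> j \<in> {0..n} \<Longrightarrow> 0 \<le> nd w j \<and> nd w j < 2*pi"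
  by (auto simp: nd_def torus_def)

lemma K_fin_arg:
  assumes j: "j \<in> {0..n}" and x: "-2*pi < x" "x < 2*pi" "x \<noteq> 0"
  shows "K j x \<noteq> -\<infinity>"
proof (cases "x < 0")
  case True
  hence "K j x = K j (x + 2*pi)" using kper[OF sck[OF j]] by simp
  also have "\<dots> = ereal (kr (K j) (x + 2*pi))" by (rule kfin[OF sck[OF j]]) (use x True in auto)
  finally show ?thesis by simp
next
  case False
  hence "K j x = ereal (kr (K j) x)" using x by (intro kfin[OF sck[OF j]]) auto
  thus ?thesis by simp
qed

lemma Msup_fin:
  assumes w: "w \<in> torus n"
  shows "Msup w \<noteq> -\<infinity>" "Msup w \<noteq> \<infinity>"
proof -
  have inf: "infinite {0<..<2*pi::real}" by (rule infinite_Ioo) simp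
  have "finite (w ` {1..n})" by simp
  then obtain t where t: "t \<in> {0<..<2*pi}" "t \<notin> w ` {1..n}"
    using Diff_infinite_finite[OF _ inf] by (metis Diff_iff ex_in_conv infinite_imp_nonempty)
  have "Fsum n K w t \<noteq> -\<infinity>" unfolding Fsum_alt
  proof -
    have "\<forall>j\<in>{0..n}. K j (t - nd w j) \<noteq> -\<infinity>"
    proof
      fix j assume j: "j \<in> {0..n}"
      have "t \<noteq> nd w j" using t j by (auto simp: nd_def)
      thus "K j (t - nd w j) \<noteq> -\<infinity>" using nd_range[OF w j] t by (intro K_fin_arg[OF j]) auto
    qed
    moreover have "\<forall>j\<in>{0..n}. K j (t - nd w j) \<noteq> \<infinity>" using knotinf[OF sck] by blast
    ultimately have "(\<Sum>j\<in>{0..n}. K j (t - nd w j)) = ereal (\<Sum>j\<in>{0..n}. real_of_ereal (K j (t - nd w j)))"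
      by (intro sum_ereal_real) (auto intro: ereal_fin_eq)
    thus "(\<Sum>j\<in>{0..n}. K j (t - nd w j)) \<noteq> -\<infinity>" by simp
  qed
  thus "Msup w \<noteq> -\<infinity>" using Fsum_le_Msup[of w t] by auto
  obtain s where "Fsum n K w s = Msup w" using Msup_attained by metis
  thus "Msup w \<noteq> \<infinity>" using Fsum_notinf by metis
qed


lemma kink:
  assumes reg: "(\<forall>j\<in>{0..n}. cond_inf' (K j)) \<or> (\<forall>j\<in>{0..n}. C1_kernel (K j))"
    and w: "w \<in> torus n" and p: "p = 0 \<or> (\<exists>j\<in>{1..n}. p = w j)"
  shows "Fsum n K w p < Msup w"
proof (rule ccontr)
  assume "\<not> Fsum n K w p < Msup w"
  hence eq: "Fsum n K w p = Msup w" using Fsum_le_Msup[of w p] by simp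
  have p01: "0 \<le> p" "p < 2*pi" using p w by (auto simp: torus_def)
  define J where "J = {j\<in>{0..n}. nd w j = p}"
  define Ob where "Ob = {0..n} - J"
  define q where "q j = (if nd w j < p then p - nd w j else p - nd w j + 2*pi)" for j
  define g where "g j = kr (K j)" for j
  define l where "l j = kr (K j) 0" for j
  have finJ: "finite J" and finO: "finite Ob" by (auto simp: J_def Ob_def)
  have JO: "J \<union> Ob = {0..n}" "J \<inter> Ob = {}" by (auto simp: J_def Ob_def)
  have Jne: "J \<noteq> {}"
  proof (cases "p = 0")
    case True thus ?thesis by (auto simp: J_def nd_def intro!: exI[of _ 0])
  next
    case False
    then obtain j where j: "j \<in> {1..n}" "p = w j" using p by auto
    hence "j \<in> J" by (auto simp: J_def nd_def)
    thus ?thesis by auto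
  qed
  have qO: "0 < q j \<and> q j < 2*pi" if j: "j \<in> Ob" for j
  proof -
    have ne: "nd w j \<noteq> p" and jn: "j \<in> {0..n}" using j by (auto simp: Ob_def J_def)
    thus ?thesis using nd_range[OF w jn] p01 by (auto simp: q_def)
  qed
  have shiftO: "K j (p + s - nd w j) = K j (q j + s)" if j: "j \<in> Ob" for j s
  proof -
    have jn: "j \<in> {0..n}" using j by (auto simp: Ob_def)
    show ?thesis
    proof (cases "nd w j < p")
      case True thus ?thesis by (simp add: q_def algebra_simps)
    next
      case False
      have "K j (p + s - nd w j) = K j ((p + s - nd w j) + 2*pi)" by (rule kper[OF sck[OF jn], symmetric])
      thus ?thesis using False by (simp add: q_def algebra_simps)
    qed
  qed
  have shiftJ: "K j (p + s - nd w j) = K j s" if j: "j \<in> J" for j s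
    using j by (simp add: J_def)
  have Fsplit: "Fsum n K w (p + s) = (\<Sum>j\<in>J. K j s) + (\<Sum>j\<in>Ob. K j (q j + s))" for s
  proof -
    have "Fsum n K w (p + s) = (\<Sum>j\<in>J \<union> Ob. K j (p + s - nd w j))" unfolding Fsum_alt JO ..
    also have "\<dots> = (\<Sum>j\<in>J. K j (p + s - nd w j)) + (\<Sum>j\<in>Ob. K j (p + s - nd w j))"
      by (rule sum.union_disjoint[OF finJ finO JO(2)])
    also have "\<dots> = (\<Sum>j\<in>J. K j s) + (\<Sum>j\<in>Ob. K j (q j + s))"
      using shiftJ shiftO by simp
    finally show ?thesis .
  qed
  have Mfin: "Msup w \<noteq> -\<infinity>" "Msup w \<noteq> \<infinity>" using Msup_fin[OF w] by auto
  have termfin: "K j (p - nd w j) \<noteq> -\<infinity>" if j: "j \<in> {0..n}" for j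
  proof (rule sum_ereal_notMInf[of "{0..n}" "\<lambda>j. K j (p - nd w j)"])
    show "(\<Sum>j\<in>{0..n}. K j (p - nd w j)) \<noteq> -\<infinity>" using eq Mfin Fsum_alt[of n K w p] by simp
  qed (use j knotinf[OF sck] in auto)
  have KJ0: "K j 0 = ereal (l j)" if j: "j \<in> J" for j
  proof -
    have jn: "j \<in> {0..n}" and "nd w j = p" using j by (auto simp: J_def)
    hence "K j 0 \<noteq> -\<infinity>" using termfin[OF jn] by simp
    thus ?thesis using ereal_fin_eq[of "K j 0"] knotinf[OF sck[OF jn]] by (simp add: l_def kr_def)
  qed
  have Kin: "K j x = ereal (g j x)" if j: "j \<in> {0..n}" and x: "0 < x" "x < 2*pi" for j x
    unfolding g_def by (rule kfin[OF sck[OF j] x])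
  have JOn: "j \<in> {0..n}" if "j \<in> J \<or> j \<in> Ob" for j using that by (auto simp: J_def Ob_def)
  define h0 where "h0 = Min (insert pi ((\<lambda>j. min (q j) (2*pi - q j)) ` Ob))"
  have h0pos: "0 < h0" unfolding h0_def using finO qO by (subst Min_gr_iff) auto
  have h0pi: "h0 \<le> pi" unfolding h0_def using finO by (intro Min_le) auto
  have h0q: "h0 \<le> q j \<and> h0 \<le> 2*pi - q j" if j: "j \<in> Ob" for j
  proof -
    have "h0 \<le> min (q j) (2*pi - q j)" unfolding h0_def using finO j by (intro Min_le) auto
    thus ?thesis by simp
  qed
  define F0 where "F0 = (\<Sum>j\<in>J. l j) + (\<Sum>j\<in>Ob. g j (q j))"
  have eF0: "Msup w = ereal F0"
  proof -
    have "Msup w = (\<Sum>j\<in>J. K j 0) + (\<Sum>j\<in>Ob. K j (q j + 0))" using Fsplit[of 0] eq by simp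
    also have "(\<Sum>j\<in>J. K j 0) = ereal (\<Sum>j\<in>J. l j)" by (rule sum_ereal_real) (use KJ0 in auto)
    also have "(\<Sum>j\<in>Ob. K j (q j + 0)) = ereal (\<Sum>j\<in>Ob. g j (q j))"
      by (rule sum_ereal_real) (use Kin qO JOn in auto)
    finally show ?thesis by (simp add: F0_def)
  qed
  have ineq: "(\<Sum>j\<in>J. g j h + g j (2*pi - h) - 2 * l j) + (\<Sum>j\<in>Ob. g j (q j + h) + g j (q j - h) - 2 * g j (q j)) \<le> 0"
    if h: "0 < h" "h < h0" for h
  proof -
    have hb: "h < 2*pi" using h h0pi by simp
    have "Fsum n K w (p + h) = ereal ((\<Sum>j\<in>J. g j h) + (\<Sum>j\<in>Ob. g j (q j + h)))"
    proof -
      have "(\<Sum>j\<in>J. K j h) = ereal (\<Sum>j\<in>J. g j h)" by (rule sum_ereal_real) (use Kin JOn h hb in auto)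
      moreover have "(\<Sum>j\<in>Ob. K j (q j + h)) = ereal (\<Sum>j\<in>Ob. g j (q j + h))"
      proof (rule sum_ereal_real)
        fix j assume j: "j \<in> Ob"
        show "K j (q j + h) = ereal (g j (q j + h))" using Kin[of j "q j + h"] JOn[of j] j qO[OF j] h0q[OF j] h by auto
      qed
      ultimately show ?thesis using Fsplit[of h] by simp
    qed
    hence i1: "(\<Sum>j\<in>J. g j h) + (\<Sum>j\<in>Ob. g j (q j + h)) \<le> F0" using Fsum_le_Msup[of w "p + h"] eF0 by simp
    have "Fsum n K w (p + - h) = ereal ((\<Sum>j\<in>J. g j (2*pi - h)) + (\<Sum>j\<in>Ob. g j (q j - h)))"
    proof -
      have "(\<Sum>j\<in>J. K j (- h)) = ereal (\<Sum>j\<in>J. g j (2*pi - h))"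
      proof (rule sum_ereal_real)
        fix j assume j: "j \<in> J"
        have "K j (- h) = K j (- h + 2*pi)" using kper[OF sck[OF JOn[of j]], of "-h"] j by simp
        also have "\<dots> = ereal (g j (2*pi - h))" using Kin[of j "2*pi - h"] JOn[of j] j h hb by auto
        finally show "K j (- h) = ereal (g j (2*pi - h))" .
      qed
      moreover have "(\<Sum>j\<in>Ob. K j (q j + - h)) = ereal (\<Sum>j\<in>Ob. g j (q j - h))"
      proof (rule sum_ereal_real)
        fix j assume j: "j \<in> Ob"
        show "K j (q j + - h) = ereal (g j (q j - h))" using Kin[of j "q j - h"] JOn[of j] j qO[OF j] h0q[OF j] h by auto
      qed
      ultimately show ?thesis using Fsplit[of "-h"] by simp
    qed
    hence i2: "(\<Sum>j\<in>J. g j (2*pi - h)) + (\<Sum>j\<in>Ob. g j (q j - h)) \<le> F0" using Fsum_le_Msup[of w "p + - h"] eF0 by simp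
    have m1: "(\<Sum>j\<in>J. 2 * l j) = 2 * sum l J" by (simp add: sum_distrib_left)
    have m2: "(\<Sum>j\<in>Ob. 2 * g j (q j)) = 2 * (\<Sum>j\<in>Ob. g j (q j))" by (simp add: sum_distrib_left)
    show ?thesis using i1 i2 m1 m2 unfolding F0_def by (simp add: sum.distrib sum_subtractf)
  qed
  interpret kinkset g J Ob q l h0
  proof
    show "finite J" "finite Ob" "J \<noteq> {}" by (rule finJ, rule finO, rule Jne)
    show "strictly_concave_on {0<..<2 * pi} (g j)" if "j \<in> J \<union> Ob" for j
      unfolding g_def using sck_sc[OF sck[OF JOn]] that by auto
    show "(g j \<longlongrightarrow> l j) (at_right 0)" "(g j \<longlongrightarrow> l j) (at_left (2*pi))" if j: "j \<in> J" for j
      using kr_right0[OF sck[OF JOn] KJ0[OF j]] j unfolding g_def by auto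
    show "h0 \<le> q j \<and> h0 \<le> 2 * pi - q j" if "j \<in> Ob" for j using h0q[OF that] .
    show "0 < h0" "h0 \<le> pi" by (rule h0pos, rule h0pi)
  qed (rule ineq)
  from reg show False
  proof
    assume ci: "\<forall>j\<in>{0..n}. cond_inf' (K j)"
    obtain j0 where j0: "j0 \<in> J" using Jne by auto
    have j0n: "j0 \<in> {0..n}" using JOn j0 by auto
    have scj: "strictly_concave_on {0<..<2*pi} (g j0)" unfolding g_def by (rule sck_sc[OF sck[OF j0n]])
    have evl: "eventually (\<lambda>x. Dplus (g j0) x = Dp (g j0) x) (at_left (2*pi))"
    proof -
      have e1: "eventually (\<lambda>x. x \<in> {0<..<2*pi}) (at_left (2*pi))" by (rule eventually_at_left_real) simp
      show ?thesis using e1 by (rule eventually_mono) (use Dplus_eq(1)[OF scj] in auto)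
    qed
    have evr: "eventually (\<lambda>x. Dminus (g j0) x = Dm (g j0) x) (at_right 0)"
    proof -
      have e1: "eventually (\<lambda>x. x \<in> {0<..<2*pi}) (at_right 0)" by (rule eventually_at_right_real) simp
      show ?thesis using e1 by (rule eventually_mono) (use Dplus_eq(2)[OF scj] in auto)
    qed
    have "filterlim (Dp (g j0)) at_bot (at_left (2*pi)) \<or> filterlim (Dm (g j0)) at_top (at_right 0)"
    proof -
      have "cond_inf' (K j0)" using ci j0n by blast
      hence "filterlim (Dplus (g j0)) at_bot (at_left (2*pi)) \<or> filterlim (Dminus (g j0)) at_top (at_right 0)"
        unfolding cond_inf'_def g_def by blast
      thus ?thesis using filterlim_cong[OF refl refl evl] filterlim_cong[OF refl refl evr] by blast
    qed
    thus False by (rule kink_inf[OF j0])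
  next
    assume c1: "\<forall>j\<in>{0..n}. C1_kernel (K j)"
    define kd where "kd j = (SOME k'. (\<forall>t\<in>{0<..<2 * pi}. (kr (K j) has_real_derivative k' t) (at t)) \<and>
                         continuous_on {0<..<2 * pi} k')" for j
    have kd: "(\<forall>t\<in>{0<..<2 * pi}. (g j has_real_derivative kd j t) (at t)) \<and> continuous_on {0<..<2 * pi} (kd j)"
      if j: "j \<in> {0..n}" for j
    proof -
      have "C1_kernel (K j)" using c1 j by blast
      thus ?thesis unfolding C1_kernel_def kd_def g_def by (rule someI_ex)
    qed
    have ev: "eventually (\<lambda>h. SO g Ob q h = (\<Sum>j\<in>Ob. kd j (q j + h) - kd j (q j - h))) (at_right 0)"
      using eventually_at_right_real[OF h0pos]
    proof (rule eventually_mono)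
      fix h assume h: "h \<in> {0<..<h0}"
      show "SO g Ob q h = (\<Sum>j\<in>Ob. kd j (q j + h) - kd j (q j - h))"
        unfolding SO_def
      proof (rule sum.cong[OF refl])
        fix j assume j: "j \<in> Ob"
        have jn: "j \<in> {0..n}" using JOn j by auto
        have scj: "strictly_concave_on {0<..<2*pi} (g j)" unfolding g_def by (rule sck_sc[OF sck[OF jn]])
        have a1: "0 < q j + h" "q j + h < 2*pi" "0 < q j - h" "q j - h < 2*pi" using h h0q[OF j] qO[OF j] by auto
        have "Dm (g j) (q j + h) = kd j (q j + h)" using kd[OF jn] a1 by (intro Dpm_deriv(2)[OF scj]) auto
        moreover have "Dp (g j) (q j - h) = kd j (q j - h)" using kd[OF jn] a1 by (intro Dpm_deriv(1)[OF scj]) auto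
        ultimately show "Dm (g j) (q j + h) - Dp (g j) (q j - h) = kd j (q j + h) - kd j (q j - h)" by simp
      qed
    qed
    have lim: "((\<lambda>h. \<Sum>j\<in>Ob. kd j (q j + h) - kd j (q j - h)) \<longlongrightarrow> (\<Sum>j\<in>Ob. kd j (q j) - kd j (q j))) (at_right 0)"
    proof (rule tendsto_sum, rule tendsto_diff)
      fix j assume j: "j \<in> Ob"
      have jn: "j \<in> {0..n}" using JOn j by auto
      have ic: "isCont (kd j) (q j)"
        using kd[OF jn] qO[OF j] continuous_on_eq_continuous_at[of "{0<..<2*pi}" "kd j"] by auto
      have t1: "((\<lambda>h. q j + h) \<longlongrightarrow> q j) (at_right 0)"
        using tendsto_add[OF tendsto_const[of "q j"] tendsto_ident_at[of 0 "{0<..}"]] by simp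
      have t2: "((\<lambda>h. q j - h) \<longlongrightarrow> q j) (at_right 0)"
        using tendsto_diff[OF tendsto_const[of "q j"] tendsto_ident_at[of 0 "{0<..}"]] by simp
      show "((\<lambda>h. kd j (q j + h)) \<longlongrightarrow> kd j (q j)) (at_right 0)" by (rule isCont_tendsto_compose[OF ic t1])
      show "((\<lambda>h. kd j (q j - h)) \<longlongrightarrow> kd j (q j)) (at_right 0)" by (rule isCont_tendsto_compose[OF ic t2])
    qed
    have "(SO g Ob q \<longlongrightarrow> 0) (at_right 0)"
      using tendsto_cong[OF ev] lim by simp
    thus False by (rule kink_C1)
  qed
qed

end



lemma sg_ineq:
  assumes sc: "strictly_concave_on {0<..<2*pi} g" and x: "0 < x" "x < 2*pi"
    and c: "Dp g x \<le> c" "c \<le> Dm g x" and s: "0 < s" "s < 2*pi" "s \<noteq> x"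
  shows "g s < g x + c * (s - x)"
proof (cases "x < s")
  case True
  have "slp g x s < Dp g x" by (rule Dp_gt[OF sc x(1) True s(2)])
  hence "(g s - g x) / (s - x) < c" using c by (simp add: slp_def)
  thus ?thesis using True by (simp add: field_simps)
next
  case False
  hence xs: "s < x" using s by simp
  have "Dm g x < slp g s x" by (rule Dm_lt[OF sc x(2) s(1) xs])
  hence "c < (g x - g s) / (x - s)" using c by (simp add: slp_def)
  thus ?thesis using xs by (simp add: field_simps)
qed

lemma sg_le:
  assumes sc: "strictly_concave_on {0<..<2*pi} g" and x: "0 < x" "x < 2*pi"
    and c: "Dp g x \<le> c" "c \<le> Dm g x" and s: "0 < s" "s < 2*pi"
  shows "g s \<le> g x + c * (s - x)"
  using sg_ineq[OF sc x c s] by (cases "s = x") (auto intro: less_imp_le)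

lemma maxsg:
  fixes g :: "nat \<Rightarrow> real \<Rightarrow> real"
  assumes fin: "finite J" and sc: "\<And>j. j \<in> J \<Longrightarrow> strictly_concave_on {0<..<2*pi} (g j)"
    and s: "\<And>j. j \<in> J \<Longrightarrow> 0 < s j \<and> s j < 2*pi" and d: "0 < \<delta>"
    and mx: "\<And>\<tau>. \<bar>\<tau>\<bar> < \<delta> \<Longrightarrow> (\<Sum>j\<in>J. g j (s j + \<tau>)) \<le> (\<Sum>j\<in>J. g j (s j))"
  shows "\<exists>c. (\<Sum>j\<in>J. c j) = 0 \<and> (\<forall>j\<in>J. Dp (g j) (s j) \<le> c j \<and> c j \<le> Dm (g j) (s j))"
proof -
  have q: "(\<Sum>j\<in>J. (g j (s j + h) - g j (s j)) / h) = ((\<Sum>j\<in>J. g j (s j + h)) - (\<Sum>j\<in>J. g j (s j))) / h" for h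
    by (simp add: sum_divide_distrib[symmetric] sum_subtractf[symmetric])
  have "((\<lambda>h. \<Sum>j\<in>J. (g j (s j + h) - g j (s j)) / h) \<longlongrightarrow> (\<Sum>j\<in>J. Dp (g j) (s j))) (at_right 0)"
    by (rule tendsto_sum) (use Dp_tendsto[OF sc] s in auto)
  moreover have "eventually (\<lambda>h. (\<Sum>j\<in>J. (g j (s j + h) - g j (s j)) / h) \<le> 0) (at_right 0)"
  proof -
    have e: "eventually (\<lambda>h. h \<in> {0<..<\<delta>}) (at_right 0)" by (rule eventually_at_right_real[OF d])
    show ?thesis using e
    proof (rule eventually_mono)
      fix h assume h: "h \<in> {0<..<\<delta>}"
      have "(\<Sum>j\<in>J. g j (s j + h)) - (\<Sum>j\<in>J. g j (s j)) \<le> 0" using mx[of h] h by auto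
      thus "(\<Sum>j\<in>J. (g j (s j + h) - g j (s j)) / h) \<le> 0" unfolding q using h by (simp add: divide_nonpos_pos)
    qed
  qed
  ultimately have Sp: "(\<Sum>j\<in>J. Dp (g j) (s j)) \<le> 0" by (rule tendsto_upperbound) simp
  have "((\<lambda>h. \<Sum>j\<in>J. (g j (s j + h) - g j (s j)) / h) \<longlongrightarrow> (\<Sum>j\<in>J. Dm (g j) (s j))) (at_left 0)"
    by (rule tendsto_sum) (use Dm_tendsto[OF sc] s in auto)
  moreover have "eventually (\<lambda>h. 0 \<le> (\<Sum>j\<in>J. (g j (s j + h) - g j (s j)) / h)) (at_left 0)"
  proof -
    have e: "eventually (\<lambda>h. h \<in> {-\<delta><..<0}) (at_left 0)" by (rule eventually_at_left_real) (use d in simp)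
    show ?thesis using e
    proof (rule eventually_mono)
      fix h assume h: "h \<in> {-\<delta><..<0}"
      have "(\<Sum>j\<in>J. g j (s j + h)) - (\<Sum>j\<in>J. g j (s j)) \<le> 0" using mx[of h] h by auto
      thus "0 \<le> (\<Sum>j\<in>J. (g j (s j + h) - g j (s j)) / h)" unfolding q using h by (simp add: divide_nonpos_neg)
    qed
  qed
  ultimately have Sm: "0 \<le> (\<Sum>j\<in>J. Dm (g j) (s j))" by (rule tendsto_lowerbound) simp
  define A where "A = (\<Sum>j\<in>J. Dp (g j) (s j))"
  define B where "B = (\<Sum>j\<in>J. Dm (g j) (s j))"
  define \<theta> where "\<theta> = (if B = A then 0 else - A / (B - A))"
  have AB: "A \<le> 0" "0 \<le> B" using Sp Sm by (auto simp: A_def B_def)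
  have th: "0 \<le> \<theta>" "\<theta> \<le> 1" using AB by (auto simp: \<theta>_def field_simps)
  have sumeq: "A + \<theta> * (B - A) = 0" using AB by (auto simp: \<theta>_def field_simps)
  define c where "c j = Dp (g j) (s j) + \<theta> * (Dm (g j) (s j) - Dp (g j) (s j))" for j
  have "(\<Sum>j\<in>J. c j) = A + \<theta> * (B - A)"
    by (simp add: c_def A_def B_def sum.distrib sum_distrib_left sum_subtractf algebra_simps)
  hence "(\<Sum>j\<in>J. c j) = 0" using sumeq by simp
  moreover have "\<forall>j\<in>J. Dp (g j) (s j) \<le> c j \<and> c j \<le> Dm (g j) (s j)"
  proof
    fix j assume j: "j \<in> J"
    have "Dp (g j) (s j) \<le> Dm (g j) (s j)" using Dp_le_Dm[OF sc[OF j]] s[OF j] by auto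
    hence "0 \<le> Dm (g j) (s j) - Dp (g j) (s j)" by simp
    thus "Dp (g j) (s j) \<le> c j \<and> c j \<le> Dm (g j) (s j)"
      using th mult_left_le_one_le[of "Dm (g j) (s j) - Dp (g j) (s j)" \<theta>] by (auto simp: c_def)
  qed
  ultimately show ?thesis by blast
qed

lemma linalg:
  fixes c :: "'k \<Rightarrow> nat \<Rightarrow> real"
  assumes "finite S" "finite I" "I \<noteq> {}" "card S \<le> card I"
  shows "\<exists>d. (\<exists>j\<in>I. d j \<noteq> 0) \<and> (\<forall>k\<in>S. 0 \<le> (\<Sum>j\<in>I. c k j * d j))"
  using assms
proof (induction S arbitrary: I c rule: finite_induct)
  case empty
  then obtain a where "a \<in> I" by auto
  thus ?case by (intro exI[of _ "\<lambda>j. 1::real"]) auto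
next
  case (insert k0 S)
  show ?case
  proof (cases "S = {}")
    case True
    obtain a where a: "a \<in> I" using insert by auto
    define d where "d j = (if j = a then (if 0 \<le> c k0 a then 1 else -1) else (0::real))" for j :: nat
    have r1: "(\<Sum>j\<in>I. c k0 j * d j) = c k0 a * d a + (\<Sum>j\<in>I - {a}. c k0 j * d j)"
      using a insert by (simp add: sum.remove)
    have r2: "(\<Sum>j\<in>I - {a}. c k0 j * d j) = 0" by (rule sum.neutral) (auto simp: d_def)
    have "(\<Sum>j\<in>I. c k0 j * d j) = c k0 a * d a" using r1 r2 by simp
    hence "0 \<le> (\<Sum>j\<in>I. c k0 j * d j)" by (auto simp: d_def)
    thus ?thesis using True a by (intro exI[of _ d]) (auto simp: d_def)
  next
    case Sne: False
    show ?thesis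
    proof (cases "\<forall>j\<in>I. c k0 j = 0")
      case True
      have "card S \<le> card I" using insert by simp
      have "\<exists>d. (\<exists>j\<in>I. d j \<noteq> 0) \<and> (\<forall>k\<in>S. 0 \<le> (\<Sum>j\<in>I. c k j * d j))"
        by (rule insert.IH) (use insert \<open>card S \<le> card I\<close> in auto)
      then obtain d where d: "\<exists>j\<in>I. d j \<noteq> 0" "\<forall>k\<in>S. 0 \<le> (\<Sum>j\<in>I. c k j * d j)"
        by blast
      thus ?thesis using True by (intro exI[of _ d]) auto
    next
      case False
      then obtain a where a: "a \<in> I" "c k0 a \<noteq> 0" by auto
      define I' where "I' = I - {a}"
      have finI': "finite I'" using insert by (simp add: I'_def)
      have cardI': "card I' = card I - 1" using a insert by (simp add: I'_def)
      have cS: "card S \<le> card I'" using insert cardI' by simp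
      have I'ne: "I' \<noteq> {}" using Sne cS insert(1) by (auto simp: card_eq_0_iff)
      define c' where "c' k j = c k j - c k a * c k0 j / c k0 a" for k j
      obtain u where u: "\<exists>j\<in>I'. u j \<noteq> 0" "\<forall>k\<in>S. 0 \<le> (\<Sum>j\<in>I'. c' k j * u j)"
        using insert.IH[OF finI' I'ne cS, of c'] by blast
      define d where "d = u(a := - (\<Sum>j\<in>I'. c k0 j * u j) / c k0 a)"
      have split: "(\<Sum>j\<in>I. f j) = f a + (\<Sum>j\<in>I'. f j)" for f :: "nat \<Rightarrow> real"
        unfolding I'_def using a insert by (simp add: sum.remove)
      have dI': "(\<Sum>j\<in>I'. f j * d j) = (\<Sum>j\<in>I'. f j * u j)" for f
        by (rule sum.cong) (auto simp: d_def I'_def)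
      have val: "(\<Sum>j\<in>I. c k j * d j) = (\<Sum>j\<in>I'. c' k j * u j)" for k
      proof -
        have "(\<Sum>j\<in>I. c k j * d j) = c k a * d a + (\<Sum>j\<in>I'. c k j * u j)" using split dI' by simp
        also have "\<dots> = (\<Sum>j\<in>I'. c k j * u j) - c k a * (\<Sum>j\<in>I'. c k0 j * u j) / c k0 a"
          by (simp add: d_def)
        also have "\<dots> = (\<Sum>j\<in>I'. c' k j * u j)"
          by (simp add: c'_def algebra_simps sum_subtractf sum_distrib_left sum_divide_distrib)
        finally show ?thesis .
      qed
      have v0: "(\<Sum>j\<in>I. c k0 j * d j) = 0"
        using split[of "\<lambda>j. c k0 j * d j"] dI'[of "c k0"] a by (simp add: d_def)
      show ?thesis
      proof (intro exI[of _ d] conjI)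
        show "\<exists>j\<in>I. d j \<noteq> 0" using u(1) by (auto simp: d_def I'_def)
        show "\<forall>k\<in>insert k0 S. 0 \<le> (\<Sum>j\<in>I. c k j * d j)" using val u(2) v0 by auto
      qed
    qed
  qed
qed

lemma dT_bound:
  assumes a: "0 \<le> a" "a < 2*pi" and b: "0 \<le> b" "b < 2*pi"
    and e: "a = b + u + 2*pi * of_int m" and u: "\<bar>u\<bar> < pi"
  shows "dT a b \<le> \<bar>u\<bar>"
proof -
  have p: "0 < pi" by simp
  consider "m = 0" | "m = 1" | "m = -1" | "m \<ge> 2" | "m \<le> -2" by linarith
  thus ?thesis
  proof cases
    case 1 thus ?thesis using e by (simp add: dT_def)
  next
    case 2
    hence "a - b = u + 2*pi" using e by simp
    thus ?thesis using a b u by (simp add: dT_def abs_if min_def)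
  next
    case 3
    hence "a - b = u - 2*pi" using e by simp
    thus ?thesis using a b u by (simp add: dT_def abs_if min_def)
  next
    case 4
    hence "(2::real) \<le> of_int m" by simp
    hence X: "2*pi*2 \<le> 2*pi * of_int m" using p by (intro mult_left_mono) auto
    have "-pi < u" "u < pi" using u by auto
    hence False using X e a b by linarith
    thus ?thesis ..
  next
    case 5
    hence "of_int m \<le> (-2::real)" by simp
    hence X: "2*pi * of_int m \<le> 2*pi*(-2)" using p by (intro mult_left_mono) auto
    have "-pi < u" "u < pi" using u by auto
    hence False using X e a b by linarith
    thus ?thesis ..
  qed
qed



locale mctx = kset +
  fixes w :: "nat \<Rightarrow> real" and \<eta> :: real
  assumes reg: "(\<forall>j\<in>{0..n}. cond_inf' (K j)) \<or> (\<forall>j\<in>{0..n}. C1_kernel (K j))"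
    and w: "w \<in> torus n" and eta: "\<eta> > 0"
    and locmin: "\<forall>y\<in>torus n. dTn n y w < \<eta> \<longrightarrow> m_upper n K w \<le> m_upper n K y"
begin

definition "\<sigma>0 = (SOME \<sigma>. admissible n w \<sigma>)"
abbreviation "z \<equiv> zz n w \<sigma>0"
definition "E = {t \<in> {0..2*pi}. Fsum n K w t = Msup w}"
definition "arcE = {k \<in> {0..n}. \<exists>t\<in>E. z k < t \<and> t < z (k+1)}"
definition "sh t j = (if t < nd w j then 2*pi else (0::real))"
definition "Mr = real_of_ereal (Msup w)"

lemma adm: "admissible n w \<sigma>0" unfolding \<sigma>0_def using adm_exists[OF w] by (rule someI_ex)
lemma perm: "\<sigma>0 permutes {1..n}" using adm by (simp add: admissible_def)

lemma MrM: "Msup w = ereal Mr" using Msup_fin[OF w] unfolding Mr_def by (cases "Msup w") auto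

lemma E_prop:
  assumes t: "t \<in> E"
  shows "0 < t" "t < 2*pi" "\<And>j. j \<in> {0..n} \<Longrightarrow> t \<noteq> nd w j"
proof -
  have t1: "t \<in> {0..2*pi}" "Fsum n K w t = Msup w" using t by (auto simp: E_def)
  have k0: "Fsum n K w 0 < Msup w" by (rule kink[OF reg w]) simp
  show "0 < t" using t1 k0 by (cases "t = 0") auto
  have "Fsum n K w (2*pi) = Fsum n K w 0" using Fsum_per_t[of w 0] by simp
  thus "t < 2*pi" using t1 k0 by (cases "t = 2*pi") auto
  fix j assume j: "j \<in> {0..n}"
  show "t \<noteq> nd w j"
  proof (cases "j = 0")
    case True thus ?thesis using t1 k0 by (auto simp: nd_def)
  next
    case False
    hence "Fsum n K w (w j) < Msup w" using j by (intro kink[OF reg w]) auto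
    thus ?thesis using t1 False by (auto simp: nd_def)
  qed
qed

lemma z_of_j: assumes j: "j \<in> {1..n}" shows "\<exists>i\<in>{1..n}. z i = w j"
proof -
  have "j \<in> \<sigma>0 ` {1..n}" using permutes_image[OF perm] j by simp
  then obtain i where i: "i \<in> {1..n}" "\<sigma>0 i = j" by auto
  thus ?thesis using zz_mid[OF perm i(1), of w] by auto
qed

lemma E_arc: assumes t: "t \<in> E" shows "\<exists>k\<in>{0..n}. z k < t \<and> t < z (k+1)"
proof -
  have tr: "t \<in> {0..2*pi}" using t by (simp add: E_def)
  obtain k where k: "k \<in> {0..n}" "z k \<le> t" "t \<le> z (k+1)" using arc_cover[OF adm tr] by blast
  have ne: "z i \<noteq> t" if i: "i \<le> n+1" for i
  proof (cases "i = 0 \<or> i = n+1")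
    case True thus ?thesis using E_prop[OF t] zz_0[of n w \<sigma>0] zz_last[of n w \<sigma>0] by auto
  next
    case False
    hence i1: "i \<in> {1..n}" using i by auto
    have "z i = w (\<sigma>0 i)" "\<sigma>0 i \<in> {1..n}" using zz_mid[OF perm i1, of w] by auto
    moreover have "t \<noteq> nd w (\<sigma>0 i)" using E_prop(3)[OF t, of "\<sigma>0 i"] calculation by auto
    ultimately show ?thesis by (auto simp: nd_def)
  qed
  have "z k < t" using k ne[of k] by (auto simp: le_less)
  moreover have "t < z (k+1)" using k ne[of "k+1"] by (auto simp: le_less)
  ultimately show ?thesis using k by blast
qed

lemma sh_same:
  assumes k: "k \<in> {0..n}" and t: "z k < t" "t < z (k+1)" and t': "z k < t'" "t' < z (k+1)"
    and j: "j \<in> {0..n}"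
  shows "sh t j = sh t' j"
proof (cases "j = 0")
  case True
  have "0 \<le> z k" using zz_range(1)[OF w perm, of k] k by simp
  thus ?thesis using True t t' by (simp add: sh_def nd_def)
next
  case False
  hence j1: "j \<in> {1..n}" using j by auto
  obtain i where i: "i \<in> {1..n}" "z i = w j" using z_of_j[OF j1] by blast
  show ?thesis
  proof (cases "i \<le> k")
    case True
    have "z i \<le> z k" by (rule zz_mono[OF adm True]) (use k in simp)
    thus ?thesis using i t t' False by (simp add: sh_def nd_def)
  next
    case False
    have "z (k+1) \<le> z i" by (rule zz_mono[OF adm]) (use False i in auto)
    thus ?thesis using i t t' \<open>j \<noteq> 0\<close> by (simp add: sh_def nd_def)
  qed
qed

lemma s_range:
  assumes t: "t \<in> E" and j: "j \<in> {0..n}"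
  shows "0 < t - nd w j + sh t j" "t - nd w j + sh t j < 2*pi"
  using E_prop[OF t] E_prop(3)[OF t j] nd_range[OF w j] by (auto simp: sh_def)

lemma K_sh: assumes j: "j \<in> {0..n}" shows "K j (x + sh t j) = K j x"
  using kper[OF sck[OF j], of x] by (simp add: sh_def)

lemma F_at_E:
  assumes t: "t \<in> E" and tau: "\<And>j. j \<in> {0..n} \<Longrightarrow> 0 < t - nd w j + sh t j + \<tau> \<and> t - nd w j + sh t j + \<tau> < 2*pi"
  shows "Fsum n K w (t + \<tau>) = ereal (\<Sum>j\<in>{0..n}. kr (K j) (t - nd w j + sh t j + \<tau>))"
  unfolding Fsum_alt
proof (rule sum_ereal_real)
  fix j assume j: "j \<in> {0..n}"
  have "K j (t + \<tau> - nd w j) = K j ((t + \<tau> - nd w j) + sh t j)" using K_sh[OF j] by simp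
  also have "\<dots> = ereal (kr (K j) (t - nd w j + sh t j + \<tau>))"
    using kfin[OF sck[OF j], of "t - nd w j + sh t j + \<tau>"] tau[OF j] by (simp add: algebra_simps)
  finally show "K j (t + \<tau> - nd w j) = ereal (kr (K j) (t - nd w j + sh t j + \<tau>))" .
qed

end



context mctx begin

definition "tstar k = (SOME t. t \<in> E \<and> z k < t \<and> t < z (k+1))"

lemma tstar: assumes "k \<in> arcE" shows "tstar k \<in> E" "z k < tstar k" "tstar k < z (k+1)"
proof -
  have "\<exists>t. t \<in> E \<and> z k < t \<and> t < z (k+1)" using assms by (auto simp: arcE_def)
  hence "tstar k \<in> E \<and> z k < tstar k \<and> tstar k < z (k+1)" unfolding tstar_def by (rule someI_ex)
  thus "tstar k \<in> E" "z k < tstar k" "tstar k < z (k+1)" by auto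
qed

abbreviation "ss k j \<equiv> tstar k - nd w j + sh (tstar k) j"

definition "cprop k c \<longleftrightarrow> (\<Sum>j\<in>{0..n}. c j) = 0 \<and>
   (\<forall>j\<in>{0..n}. Dp (kr (K j)) (ss k j) \<le> c j \<and> c j \<le> Dm (kr (K j)) (ss k j))"

lemma sg_exists: assumes k: "k \<in> arcE" shows "\<exists>c. cprop k c"
proof -
  define t where "t = tstar k"
  have t: "t \<in> E" using tstar[OF k] by (simp add: t_def)
  define s where "s j = t - nd w j + sh t j" for j
  have s: "0 < s j \<and> s j < 2*pi" if "j \<in> {0..n}" for j using s_range[OF t that] by (simp add: s_def)
  define \<delta> where "\<delta> = Min ((\<lambda>j. min (s j) (2*pi - s j)) ` {0..n})"
  have \<delta>: "0 < \<delta>" unfolding \<delta>_def using s by (subst Min_gr_iff) auto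
  have \<delta>s: "\<delta> \<le> s j \<and> \<delta> \<le> 2*pi - s j" if j: "j \<in> {0..n}" for j
  proof -
    have "\<delta> \<le> min (s j) (2*pi - s j)" unfolding \<delta>_def using j by (intro Min_le) auto
    thus ?thesis by simp
  qed
  have F0: "Msup w = ereal (\<Sum>j\<in>{0..n}. kr (K j) (s j))"
  proof -
    have "Fsum n K w (t + 0) = ereal (\<Sum>j\<in>{0..n}. kr (K j) (t - nd w j + sh t j + 0))"
      by (rule F_at_E[OF t]) (use s in \<open>auto simp: s_def\<close>)
    thus ?thesis using t by (simp add: E_def s_def)
  qed
  have "\<exists>c. (\<Sum>j\<in>{0..n}. c j) = 0 \<and> (\<forall>j\<in>{0..n}. Dp (kr (K j)) (s j) \<le> c j \<and> c j \<le> Dm (kr (K j)) (s j))"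
  proof (rule maxsg[OF _ _ _ \<delta>])
    show "finite {0..n}" by simp
    show "strictly_concave_on {0<..<2 * pi} (kr (K j))" if "j \<in> {0..n}" for j by (rule sck_sc[OF sck[OF that]])
    show "0 < s j \<and> s j < 2 * pi" if "j \<in> {0..n}" for j using s[OF that] .
    fix \<tau> :: real assume tau: "\<bar>\<tau>\<bar> < \<delta>"
    have "Fsum n K w (t + \<tau>) = ereal (\<Sum>j\<in>{0..n}. kr (K j) (t - nd w j + sh t j + \<tau>))"
    proof (rule F_at_E[OF t])
      fix j assume j: "j \<in> {0..n}"
      show "0 < t - nd w j + sh t j + \<tau> \<and> t - nd w j + sh t j + \<tau> < 2 * pi"
        using \<delta>s[OF j] tau by (auto simp: s_def)
    qed
    hence "ereal (\<Sum>j\<in>{0..n}. kr (K j) (s j + \<tau>)) \<le> Msup w" using Fsum_le_Msup[of w "t + \<tau>"]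
      by (simp add: s_def)
    thus "(\<Sum>j\<in>{0..n}. kr (K j) (s j + \<tau>)) \<le> (\<Sum>j\<in>{0..n}. kr (K j) (s j))" using F0 by simp
  qed
  thus ?thesis unfolding cprop_def s_def t_def by blast
qed

definition "cc k = (SOME c. cprop k c)"

lemma cc: "k \<in> arcE \<Longrightarrow> cprop k (cc k)" unfolding cc_def using sg_exists by (rule someI_ex)

lemma E_ne: "E \<noteq> {}"
proof -
  obtain t where "t \<in> {0..2*pi}" "Fsum n K w t = Msup w" using Msup_attained by metis
  thus ?thesis by (auto simp: E_def)
qed

lemma arcE_ne: "arcE \<noteq> {}"
proof -
  obtain t where t: "t \<in> E" using E_ne by auto
  obtain k where "k \<in> {0..n}" "z k < t" "t < z (k+1)" using E_arc[OF t] by blast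
  thus ?thesis using t by (auto simp: arcE_def)
qed

lemma dvec:
  assumes notall: "arcE \<noteq> {0..n}"
  shows "\<exists>d. (\<exists>j\<in>{1..n}. d j \<noteq> 0) \<and> (\<forall>k\<in>arcE. 0 \<le> (\<Sum>j\<in>{1..n}. cc k j * d j))"
proof (rule linalg)
  have sub: "arcE \<subseteq> {0..n}" by (auto simp: arcE_def)
  hence "card arcE < card {0..n}" using notall by (intro psubset_card_mono) auto
  thus "card arcE \<le> card {1..n}" by simp
  show "finite arcE" using sub finite_subset by blast
  show "finite {1..n}" by simp
  show "{1..n} \<noteq> {}"
  proof
    assume "{1..n} = {}"
    hence n0: "n = 0" by simp
    obtain k where "k \<in> arcE" using arcE_ne by auto
    hence "arcE = {0..n}" using sub n0 by auto
    thus False using notall by simp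
  qed
qed

abbreviation "Phi d e t \<equiv> Fsum n K (\<lambda>j. w j + e * d j) t"

lemma nd_pert: "nd (\<lambda>j. w j + e * d j) j = nd w j + e * (if j = 0 then 0 else d j)"
  by (simp add: nd_def)

lemma localB:
  assumes d1: "\<exists>j\<in>{1..n}. d j \<noteq> 0" and d2: "\<forall>k\<in>arcE. 0 \<le> (\<Sum>j\<in>{1..n}. cc k j * d j)"
    and t0: "t0 \<in> E"
  shows "\<exists>\<rho>>0. \<forall>e t. 0 < e \<and> e < \<rho> \<and> \<bar>t - t0\<bar> < \<rho> \<longrightarrow> Phi d e t < Msup w"
proof -
  obtain k where k: "k \<in> {0..n}" "z k < t0" "t0 < z (k+1)" using E_arc[OF t0] by blast
  have kA: "k \<in> arcE" using k t0 by (auto simp: arcE_def)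
  define tk where "tk = tstar k"
  have tk: "tk \<in> E" "z k < tk" "tk < z (k+1)" using tstar[OF kA] by (auto simp: tk_def)
  have shs: "sh t0 j = sh tk j" if "j \<in> {0..n}" for j by (rule sh_same[OF k(1) k(2,3) tk(2,3) that])
  define c where "c = cc k"
  have c: "(\<Sum>j\<in>{0..n}. c j) = 0" "\<And>j. j \<in> {0..n} \<Longrightarrow> Dp (kr (K j)) (ss k j) \<le> c j \<and> c j \<le> Dm (kr (K j)) (ss k j)"
    using cc[OF kA] by (auto simp: cprop_def c_def)
  define dd where "dd j = (if j = 0 then 0 else d j)" for j
  define s0 where "s0 j = t0 - nd w j + sh t0 j" for j
  have s0: "0 < s0 j \<and> s0 j < 2*pi" if "j \<in> {0..n}" for j using s_range[OF t0 that] by (simp add: s0_def)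
  define m0 where "m0 = Min ((\<lambda>j. min (s0 j) (2*pi - s0 j)) ` {0..n})"
  have m0: "0 < m0" unfolding m0_def using s0 by (subst Min_gr_iff) auto
  have m0s: "m0 \<le> s0 j \<and> m0 \<le> 2*pi - s0 j" if j: "j \<in> {0..n}" for j
  proof -
    have "m0 \<le> min (s0 j) (2*pi - s0 j)" unfolding m0_def using j by (intro Min_le) auto
    thus ?thesis by simp
  qed
  define D where "D = 1 + (\<Sum>j\<in>{0..n}. \<bar>dd j\<bar>)"
  have D1: "1 \<le> D" unfolding D_def by (simp add: sum_nonneg)
  have Dd: "\<bar>dd j\<bar> \<le> D - 1" if "j \<in> {0..n}" for j
    unfolding D_def using member_le_sum[of j "{0..n}" "\<lambda>j. \<bar>dd j\<bar>"] that by simp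
  define \<rho> where "\<rho> = m0 / (2 * D)"
  have \<rho>: "0 < \<rho>" using m0 D1 by (simp add: \<rho>_def)
  have \<rho>D: "\<rho> * D = m0 / 2" using D1 by (simp add: \<rho>_def)
  have Mr_eq: "Mr = (\<Sum>j\<in>{0..n}. kr (K j) (ss k j))"
  proof -
    have "Fsum n K w (tk + 0) = ereal (\<Sum>j\<in>{0..n}. kr (K j) (tk - nd w j + sh tk j + 0))"
      by (rule F_at_E[OF tk(1)]) (use s_range[OF tk(1)] in auto)
    hence "Msup w = ereal (\<Sum>j\<in>{0..n}. kr (K j) (ss k j))" using tk(1) by (simp add: E_def tk_def)
    thus ?thesis using MrM by simp
  qed
  have cd: "(\<Sum>j\<in>{0..n}. c j * dd j) = (\<Sum>j\<in>{1..n}. c j * d j)"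
  proof -
    have "(\<Sum>j\<in>{0..n}. c j * dd j) = c 0 * dd 0 + (\<Sum>j\<in>{Suc 0..n}. c j * dd j)"
      by (rule sum.atLeast_Suc_atMost) simp
    also have "(\<Sum>j\<in>{Suc 0..n}. c j * dd j) = (\<Sum>j\<in>{1..n}. c j * d j)"
      by (rule sum.cong) (auto simp: dd_def)
    finally show ?thesis by (simp add: dd_def)
  qed
  have cdpos: "0 \<le> (\<Sum>j\<in>{1..n}. c j * d j)" using d2 kA by (simp add: c_def)
  show ?thesis
  proof (intro exI[of _ \<rho>] conjI allI impI \<rho>)
    fix e t assume et: "0 < e \<and> e < \<rho> \<and> \<bar>t - t0\<bar> < \<rho>"
    define u where "u j = t - nd w j - e * dd j + sh t0 j" for j
    have u: "0 < u j \<and> u j < 2*pi" if j: "j \<in> {0..n}" for j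
    proof -
      have ud: "u j - s0 j = (t - t0) - e * dd j" by (simp add: u_def s0_def)
      have "\<bar>(t - t0) - e * dd j\<bar> \<le> \<bar>t - t0\<bar> + \<bar>e * dd j\<bar>" by (rule abs_triangle_ineq4)
      also have "\<bar>e * dd j\<bar> = e * \<bar>dd j\<bar>" using et by (simp add: abs_mult)
      finally have "\<bar>u j - s0 j\<bar> \<le> \<bar>t - t0\<bar> + e * \<bar>dd j\<bar>" using ud by simp
      also have "\<dots> \<le> \<rho> + \<rho> * (D - 1)"
        using et Dd[OF j] by (intro add_mono mult_mono) auto
      also have "\<dots> = m0 / 2" using \<rho>D by (simp add: algebra_simps)
      finally have "\<bar>u j - s0 j\<bar> \<le> m0 / 2" .
      hence "u j - s0 j \<le> m0 / 2" "s0 j - u j \<le> m0 / 2" by linarith+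
      thus ?thesis using m0s[OF j] m0 by linarith
    qed
    have Phi_eq: "Phi d e t = ereal (\<Sum>j\<in>{0..n}. kr (K j) (u j))"
      unfolding Fsum_alt
    proof (rule sum_ereal_real)
      fix j assume j: "j \<in> {0..n}"
      have "K j (t - nd (\<lambda>j. w j + e * d j) j) = K j ((t - nd w j - e * dd j) + sh t0 j)"
        using K_sh[OF j, of "t - nd w j - e * dd j" t0] by (simp add: nd_pert dd_def algebra_simps)
      also have "\<dots> = ereal (kr (K j) (u j))" using kfin[OF sck[OF j], of "u j"] u[OF j] by (simp add: u_def)
      finally show "K j (t - nd (\<lambda>j. w j + e * d j) j) = ereal (kr (K j) (u j))" .
    qed
    have udiff: "u j - ss k j = (t - tk) - e * dd j" if "j \<in> {0..n}" for j
      using shs[OF that] by (simp add: u_def tk_def)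
    have ss_r: "0 < ss k j \<and> ss k j < 2*pi" if "j \<in> {0..n}" for j using s_range[OF tk(1) that] by (simp add: tk_def)
    have strict: "\<exists>j\<in>{0..n}. u j \<noteq> ss k j"
    proof (cases "t = tk")
      case False
      have "u 0 - ss k 0 = t - tk" using udiff[of 0] by (simp add: dd_def)
      thus ?thesis using False by (intro bexI[of _ 0]) auto
    next
      case True
      obtain j1 where j1: "j1 \<in> {1..n}" "d j1 \<noteq> 0" using d1 by blast
      have "u j1 - ss k j1 = - e * d j1" using udiff[of j1] j1 True by (simp add: dd_def)
      hence "u j1 \<noteq> ss k j1" using et j1 by auto
      thus ?thesis using j1 by (intro bexI[of _ j1]) auto
    qed
    have "(\<Sum>j\<in>{0..n}. kr (K j) (u j)) < (\<Sum>j\<in>{0..n}. kr (K j) (ss k j) + c j * (u j - ss k j))"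
    proof (rule sum_strict_mono_ex1)
      show "finite {0..n}" by simp
      show "\<forall>j\<in>{0..n}. kr (K j) (u j) \<le> kr (K j) (ss k j) + c j * (u j - ss k j)"
        using sg_le[OF sck_sc[OF sck] ss_r[THEN conjunct1] ss_r[THEN conjunct2] c(2)[THEN conjunct1] c(2)[THEN conjunct2]
            u[THEN conjunct1] u[THEN conjunct2]] by blast
      obtain j where j: "j \<in> {0..n}" "u j \<noteq> ss k j" using strict by blast
      have "kr (K j) (u j) < kr (K j) (ss k j) + c j * (u j - ss k j)"
        by (rule sg_ineq[OF sck_sc[OF sck[OF j(1)]]]) (use ss_r[OF j(1)] c(2)[OF j(1)] u[OF j(1)] j(2) in auto)
      thus "\<exists>j\<in>{0..n}. kr (K j) (u j) < kr (K j) (ss k j) + c j * (u j - ss k j)" using j(1) by blast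
    qed
    also have "\<dots> = Mr + (t - tk) * (\<Sum>j\<in>{0..n}. c j) - e * (\<Sum>j\<in>{0..n}. c j * dd j)"
    proof -
      have "(\<Sum>j\<in>{0..n}. kr (K j) (ss k j) + c j * (u j - ss k j))
          = (\<Sum>j\<in>{0..n}. kr (K j) (ss k j) + ((t - tk) * c j - e * (c j * dd j)))"
      proof (rule sum.cong[OF refl])
        fix j assume j: "j \<in> {0..n}"
        show "kr (K j) (ss k j) + c j * (u j - ss k j) = kr (K j) (ss k j) + ((t - tk) * c j - e * (c j * dd j))"
          unfolding udiff[OF j] by (simp add: algebra_simps)
      qed
      also have "\<dots> = (\<Sum>j\<in>{0..n}. kr (K j) (ss k j)) + ((t - tk) * (\<Sum>j\<in>{0..n}. c j) - e * (\<Sum>j\<in>{0..n}. c j * dd j))"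
        by (simp only: sum.distrib sum_subtractf sum_distrib_left)
      finally show ?thesis using Mr_eq by simp
    qed
    also have "\<dots> \<le> Mr" using c(1) cd cdpos et by simp
    finally have "(\<Sum>j\<in>{0..n}. kr (K j) (u j)) < Mr" .
    thus "Phi d e t < Msup w" using Phi_eq MrM by simp
  qed
qed

end



context mctx begin

lemma localA:
  assumes t0: "Fsum n K w t0 < Msup w"
  shows "\<exists>\<rho>>0. \<forall>e t. 0 < e \<and> e < \<rho> \<and> \<bar>t - t0\<bar> < \<rho> \<longrightarrow> Phi d e t < Msup w"
proof -
  define f where "f P = Fsum n K (\<lambda>j. w j + fst P * d j) (snd P)" for P :: "real \<times> real"
  have ic: "isCont f (0, t0)" unfolding f_def
    by (rule Fsum_isCont_gen) (auto intro!: continuous_intros)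
  have f0: "f (0, t0) = Fsum n K w t0" by (simp add: f_def)
  obtain S where S: "open S" "(0, t0) \<in> S" "\<forall>x'\<in>S. f x' \<in> {..<Msup w}"
    using ic[unfolded continuous_at_open, rule_format, of "{..<Msup w}"] f0 t0 by auto
  obtain r where r: "r > 0" "\<forall>y. dist y (0, t0) < r \<longrightarrow> y \<in> S"
    using S(1,2) unfolding open_dist by blast
  show ?thesis
  proof (intro exI[of _ "r/2"] conjI allI impI)
    show "0 < r / 2" using r by simp
    fix e t assume et: "0 < e \<and> e < r / 2 \<and> \<bar>t - t0\<bar> < r / 2"
    have "dist (e, t) (0, t0) = sqrt ((dist e 0)\<^sup>2 + (dist t t0)\<^sup>2)" by (simp add: dist_Pair_Pair)
    also have "\<dots> \<le> \<bar>dist e 0\<bar> + \<bar>dist t t0\<bar>" by (rule sqrt_sum_squares_le_sum_abs)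
    also have "\<dots> < r" using et by (simp add: dist_real_def)
    finally have "(e, t) \<in> S" using r by blast
    hence "f (e, t) < Msup w" using S(3) by auto
    thus "Phi d e t < Msup w" by (simp add: f_def)
  qed
qed

lemma localAll:
  assumes d1: "\<exists>j\<in>{1..n}. d j \<noteq> 0" and d2: "\<forall>k\<in>arcE. 0 \<le> (\<Sum>j\<in>{1..n}. cc k j * d j)"
    and t0: "t0 \<in> {0..2*pi}"
  shows "\<exists>\<rho>>0. \<forall>e t. 0 < e \<and> e < \<rho> \<and> \<bar>t - t0\<bar> < \<rho> \<longrightarrow> Phi d e t < Msup w"
proof (cases "Fsum n K w t0 < Msup w")
  case True thus ?thesis by (rule localA)
next
  case False
  hence "t0 \<in> E" using Fsum_le_Msup[of w t0] t0 by (auto simp: E_def)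
  thus ?thesis by (rule localB[OF d1 d2])
qed

lemma uniform:
  assumes d1: "\<exists>j\<in>{1..n}. d j \<noteq> 0" and d2: "\<forall>k\<in>arcE. 0 \<le> (\<Sum>j\<in>{1..n}. cc k j * d j)"
  shows "\<exists>\<rho>>0. \<forall>e t. 0 < e \<and> e < \<rho> \<and> t \<in> {0..2*pi} \<longrightarrow> Phi d e t < Msup w"
proof -
  define good where "good t0 \<rho> \<longleftrightarrow> \<rho> > 0 \<and> (\<forall>e t. 0 < e \<and> e < \<rho> \<and> \<bar>t - t0\<bar> < \<rho> \<longrightarrow> Phi d e t < Msup w)" for t0 \<rho>
  define rf where "rf t0 = (SOME \<rho>. good t0 \<rho>)" for t0
  have rf: "good t0 (rf t0)" if "t0 \<in> {0..2*pi}" for t0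
    unfolding rf_def by (rule someI_ex) (use localAll[OF d1 d2 that] in \<open>auto simp: good_def\<close>)
  have cov: "{0..2*pi} \<subseteq> (\<Union>c\<in>{0..2*pi}. ball c (rf c))"
  proof
    fix t assume "t \<in> {0..2*pi}"
    moreover hence "t \<in> ball t (rf t)" using rf[of t] by (auto simp: good_def)
    ultimately show "t \<in> (\<Union>c\<in>{0..2*pi}. ball c (rf c))" by blast
  qed
  obtain C where C: "C \<subseteq> {0..2*pi}" "finite C" "{0..2*pi} \<subseteq> (\<Union>c\<in>C. ball c (rf c))"
    using compactE_image[OF compact_Icc _ cov] by blast
  have Cne: "C \<noteq> {}" using C(3) by auto
  define \<rho> where "\<rho> = Min (rf ` C)"
  have \<rho>: "0 < \<rho>" unfolding \<rho>_def using C Cne rf by (subst Min_gr_iff) (auto simp: good_def)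
  show ?thesis
  proof (intro exI[of _ \<rho>] conjI allI impI \<rho>)
    fix e t assume et: "0 < e \<and> e < \<rho> \<and> t \<in> {0..2*pi}"
    then obtain c where c: "c \<in> C" "t \<in> ball c (rf c)" using C(3) by blast
    have "\<rho> \<le> rf c" unfolding \<rho>_def using C c by (intro Min_le) auto
    moreover have "\<bar>t - c\<bar> < rf c" using c by (simp add: dist_real_def abs_minus_commute)
    ultimately show "Phi d e t < Msup w" using rf[of c] C c et by (auto simp: good_def)
  qed
qed

lemma not_notall: assumes notall: "arcE \<noteq> {0..n}" shows False
proof -
  obtain d where d1: "\<exists>j\<in>{1..n}. d j \<noteq> 0" and d2: "\<forall>k\<in>arcE. 0 \<le> (\<Sum>j\<in>{1..n}. cc k j * d j)"
    using dvec[OF notall] by blast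
  obtain \<rho> where \<rho>: "0 < \<rho>" "\<forall>e t. 0 < e \<and> e < \<rho> \<and> t \<in> {0..2*pi} \<longrightarrow> Phi d e t < Msup w"
    using uniform[OF d1 d2] by blast
  define Dd where "Dd = 1 + (\<Sum>j\<in>{1..n}. \<bar>d j\<bar>)"
  have Dd1: "1 \<le> Dd" unfolding Dd_def by (simp add: sum_nonneg)
  have Ddj: "\<bar>d j\<bar> \<le> Dd - 1" if "j \<in> {1..n}" for j
    unfolding Dd_def using member_le_sum[of j "{1..n}" "\<lambda>j. \<bar>d j\<bar>"] that by simp
  define e where "e = min \<rho> (min \<eta> pi / Dd) / 2"
  have mpos: "0 < min \<eta> pi / Dd" using eta Dd1 by simp
  have e: "0 < e" "e < \<rho>" "e * Dd < min \<eta> pi"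
  proof -
    have "0 < min \<rho> (min \<eta> pi / Dd)" using \<rho> mpos by simp
    thus "0 < e" by (simp add: e_def)
    obtain mm where mm: "mm = min \<rho> (min \<eta> pi / Dd)" by blast
    have "mm \<le> \<rho>" "e = mm / 2" using mm by (auto simp: e_def)
    thus "e < \<rho>" using \<rho>(1) by linarith
    have "e \<le> min \<eta> pi / Dd / 2" unfolding e_def by simp
    hence "e * Dd \<le> min \<eta> pi / 2" using Dd1 by (simp add: field_simps)
    moreover have "0 < min \<eta> pi" using eta by simp
    ultimately show "e * Dd < min \<eta> pi" by linarith
  qed
  have ed: "e * \<bar>d j\<bar> < min \<eta> pi" if "j \<in> {1..n}" for j
  proof -
    have "e * \<bar>d j\<bar> \<le> e * (Dd - 1)" using Ddj[OF that] e by (intro mult_left_mono) auto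
    thus ?thesis using e by (simp add: algebra_simps)
  qed
  define y where "y j = (if j \<in> {1..n} then red (w j + e * d j) else w j)" for j
  have yt: "y \<in> torus n" using red_bounds by (auto simp: torus_def y_def)
  have yshift: "\<exists>m::int. y j = (w j + e * d j) + 2*pi * of_int m" if "j \<in> {1..n}" for j
    using that by (intro exI[of _ "- \<lfloor>(w j + e * d j) / (2*pi)\<rfloor>"]) (simp add: y_def red_def)
  have Fy: "Fsum n K y t = Phi d e t" for t by (rule Fsum_shift) (use yshift in auto)
  have dT: "dT (y j) (w j) < \<eta>" if j: "j \<in> {1..n}" for j
  proof -
    obtain m :: int where m: "y j = (w j + e * d j) + 2*pi * of_int m" using yshift[OF j] by blast
    have "dT (y j) (w j) \<le> \<bar>e * d j\<bar>"
    proof (rule dT_bound)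
      show "0 \<le> y j" "y j < 2*pi" using yt j by (auto simp: torus_def)
      show "0 \<le> w j" "w j < 2*pi" using w j by (auto simp: torus_def)
      show "y j = w j + e * d j + 2*pi * of_int m" using m .
      show "\<bar>e * d j\<bar> < pi" using ed[OF j] e by (simp add: abs_mult)
    qed
    also have "\<dots> < \<eta>" using ed[OF j] e by (simp add: abs_mult)
    finally show ?thesis .
  qed
  have "dTn n y w < \<eta>" unfolding dTn_def using dT eta by (subst Max_less_iff) auto
  hence "m_upper n K w \<le> m_upper n K y" using locmin yt by blast
  hence le: "Msup w \<le> Msup y" using m_upper_Msup[OF w] m_upper_Msup[OF yt] by simp
  obtain t1 where t1: "t1 \<in> {0..2*pi}" "Fsum n K y t1 = Msup y" using Msup_attained by metis
  have "Phi d e t1 < Msup w" using \<rho>(2) e(1,2) t1(1) by blast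
  hence "Msup y < Msup w" using t1(2) Fy[of t1] by simp
  thus False using le by simp
qed

lemma conclusion:
  "m_lower n K w = m_upper n K w \<and> (\<exists>\<sigma>. \<sigma> permutes {1..n} \<and> w \<in> open_simplex n \<sigma>)"
proof -
  have all: "arcE = {0..n}" using not_notall by blast
  have arc: "\<exists>t\<in>E. z k < t \<and> t < z (k+1)" if "k \<in> {0..n}" for k using all that by (auto simp: arcE_def)
  have os: "w \<in> open_simplex n \<sigma>0" unfolding open_simplex_def
  proof (clarify)
    fix k assume "k \<in> {0..n}"
    then obtain t where "z k < t" "t < z (k+1)" using arc by blast
    thus "z k < z (k+1)" by simp
  qed
  have ma: "m_arc n K w \<sigma>0 k = Msup w" if k: "k \<in> {0..n}" for k
  proof (rule antisym)
    show "m_arc n K w \<sigma>0 k \<le> Msup w" unfolding m_arc_def by (rule SUP_least) (rule Fsum_le_Msup)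
    obtain t where t: "t \<in> E" "z k < t" "t < z (k+1)" using arc[OF k] by blast
    have "Fsum n K w t \<le> m_arc n K w \<sigma>0 k" unfolding m_arc_def by (rule SUP_upper) (use t in auto)
    thus "Msup w \<le> m_arc n K w \<sigma>0 k" using t by (simp add: E_def)
  qed
  have img: "m_arc n K w \<sigma>0 ` {0..n} = {Msup w}" using ma by auto
  have "m_upper n K w = Msup w" "m_lower n K w = Msup w"
    unfolding m_upper_def m_lower_def Let_def \<sigma>0_def[symmetric] img by simp_all
  thus ?thesis using os perm by auto
qed

end


theorem proposition6p9:
  fixes n :: nat and K :: "nat \<Rightarrow> real \<Rightarrow> ereal" and w :: "nat \<Rightarrow> real" and \<eta> :: real
  assumes kern: "\<forall>j\<in>{0..n}. strictly_concave_kernel (K j)"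
    and reg: "(\<forall>j\<in>{0..n}. cond_inf' (K j)) \<or> (\<forall>j\<in>{0..n}. C1_kernel (K j))"
    and w: "w \<in> torus n"
    and eta: "\<eta> > 0"
    and locmin: "\<forall>y\<in>torus n. dTn n y w < \<eta> \<longrightarrow> m_upper n K w \<le> m_upper n K y"
  shows "m_lower n K w = m_upper n K w \<and> (\<exists>\<sigma>. \<sigma> permutes {1..n} \<and> w \<in> open_simplex n \<sigma>)"
proof -
  interpret mctx n K w \<eta>
    by unfold_locales (use kern reg w eta locmin in auto)
  show ?thesis by (rule conclusion)
qed

end
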